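(* Let $T$ be a $\delta$-Jordan Lie supertriple system over a field $\mathbb{K}$ with $H^3_\delta(T,T)=0$. Then $T$ is analytically rigid, i.e. every 1-parameter formal deformation $f_t$ of $T$ is equivalent to the null deformation $f_0$.
   Context: A $\delta$-Jordan Lie supertriple system ($\delta\in\{1,-1\}$) is a $\mathbb{Z}_2$-graded vector space $T$ with a trilinear product $[\cdot,\cdot,\cdot]$ such that, for all homogeneous $a,b,c,d,e$ (with $|a|$ the degree of $a$): (A1) $|[a,b,c]|=|a|+|b|+|c|$; (A2) $[b,a,c]=-\delta(-1)^{|a||b|}[a,b,c]$; (A3) $(-1)^{|a||c|}[a,b,c]+(-1)^{|b||a|}[b,c,a]+(-1)^{|c||b|}[c,a,b]=0$; (A4) $[a,b,[c,d,e]]=[[a,b,c],d,e]+(-1)^{|c|(|a|+|b|)}[c,[a,b,d],e]+\delta(-1)^{(|a|+|b|)(|c|+|d|)}[c,d,[a,b,e]]$. A 1-parameter formal deformation of $T$ is $f_t=\sum_{i\ge0}f_i t^i$ where each $f_i:T\times T\times T\to T$ is $\mathbb{K}$-trilinear (extended $\mathbb{K}[[t]]$-trilinearly to $T[[t]]$), $f_0(x_1,x_2,x_3)=[x_1,x_2,x_3]$, and $f_t$ satisfies (A1)–(A4) with $[\cdot,\cdot,\cdot]$ replaced by $f_t$. The null deformation is the one with $f_i=0$ for all $i\ge1$ (i.e. $f_t=f_0$). Two deformations $f_t,f'_t$ are equivalent if there is $\phi_t=\sum_{i\ge0}\phi_it^i$, $\phi_0=id_T$, $\phi_i:T\to T$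 $\mathbb{K}$-linear (extended $\mathbb{K}[[t]]$-linearly), with $\phi_t f_t(x_1,x_2,x_3)=f'_t(\phi_t(x_1),\phi_t(x_2),\phi_t(x_3))$ for all $x_1,x_2,x_3$. Cohomology with adjoint coefficients: let $\theta(a,b)(x)=(-1)^{|x|(|a|+|b|)}[x,a,b]$ and $D(a,b)(x)=\delta[a,b,x]$. $C^1_\delta(T,T)$ is the space of linear maps $T\to T$; $C^3_\delta(T,T)$ is the space of trilinear $f:T^3\to T$ with $f(x_2,x_1,x_3)=-\delta(-1)^{|x_1||x_2|}f(x_1,x_2,x_3)$ and $(-1)^{|x_1||x_3|}f(x_1,x_2,x_3)+(-1)^{|x_2||x_1|}f(x_2,x_3,x_1)+(-1)^{|x_3||x_2|}f(x_3,x_1,x_2)=0$. For homogeneous $f$: $d^{1}f(x_1,x_2,x_3)=(-1)^{(|f|+|x_1|)(|x_2|+|x_3|)}\theta(x_2,x_3)f(x_1)-f([x_1,x_2,x_3])+\delta(-1)^{|f|(|x_1|+|x_2|)}D(x_1,x_2)f(x_3)-\delta(-1)^{|x_2||x_3|+|f|(|x_1|+|x_3|)}\theta(x_1,x_3)f(x_2)$; $d^{3}f(x_1,\dots,x_5)=(-1)^{(|f|+|x_1|+|x_2|+|x_3|)(|x_4|+|x_5|)}\theta(x_4,x_5)f(x_1,x_2,x_3)-\delta(-1)^{(|f|+|x_1|+|x_2|)(|x_3|+|x_5|)+|x_4||x_5|}\theta(x_3,x_5)f(x_1,x_2,x_4)-\delta(-1)^{|f|(|x_1|+|x_2|)}D(x_1,x_2)f(x_3,x_4,x_5)+(-1)^{(|f|+|x_1|+|x_2|)(|x_3|+|x_4|)}D(x_3,x_4)f(x_1,x_2,x_5)+f([x_1,x_2,x_3],x_4,x_5)-f(x_1,x_2,[x_3,x_4,x_5])+(-1)^{|x_3|(|x_1|+|x_2|)}f(x_3,[x_1,x_2,x_4],x_5)+\delta(-1)^{(|x_1|+|x_2|)(|x_3|+|x_4|)}f(x_3,x_4,[x_1,x_2,x_5])$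 (extended linearly). $Z^3_\delta(T,T)=\{f\in C^3_\delta(T,T)\mid d^3f=0\}$, $B^3_\delta(T,T)=d^1C^1_\delta(T,T)$, and $H^3_\delta(T,T)=Z^3_\delta(T,T)/B^3_\delta(T,T)$. *)

theory Defs
  imports Complex_Main
begin

text \<open>The underlying space T is a type 'v with a K-vector space structure
 given by a scalar multiplication sc (K a field 'k). The Z2-grading is T = T0 (+) T1.
 Degrees are natural numbers; only their parity matters. Power series T[[t]] are
 functions nat => 'v (coefficient sequences).\<close>

definition sg :: "nat \<Rightarrow> 'k::field" where
  "sg n = (-1) ^ n"

definition hom :: "'v set \<Rightarrow> 'v set \<Rightarrow> nat \<Rightarrow> 'v set" where
  "hom T0 T1 d = (if even d then T0 else T1)"

definition graded_space :: "('k::field \<Rightarrow> 'v::ab_group_add \<Rightarrow> 'v) \<Rightarrow> 'v set \<Rightarrow> 'v set \<Rightarrow> bool" where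
  "graded_space sc T0 T1 \<longleftrightarrow> vector_space sc \<and> module.subspace sc T0 \<and> module.subspace sc T1
     \<and> T0 \<inter> T1 = {0} \<and> (\<forall>v. \<exists>a\<in>T0. \<exists>b\<in>T1. v = a + b)"

definition proj :: "'v set \<Rightarrow> 'v set \<Rightarrow> nat \<Rightarrow> 'v::ab_group_add \<Rightarrow> 'v" where
  "proj T0 T1 d v = (THE w. w \<in> hom T0 T1 d \<and> v - w \<in> hom T0 T1 (Suc d))"

definition trilinear :: "('k::field \<Rightarrow> 'v::ab_group_add \<Rightarrow> 'v) \<Rightarrow> ('v \<Rightarrow> 'v \<Rightarrow> 'v \<Rightarrow> 'v) \<Rightarrow> bool" where
  "trilinear sc f \<longleftrightarrow> (\<forall>y z. Vector_Spaces.linear sc sc (\<lambda>x. f x y z))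
     \<and> (\<forall>x z. Vector_Spaces.linear sc sc (\<lambda>y. f x y z))
     \<and> (\<forall>x y. Vector_Spaces.linear sc sc (\<lambda>z. f x y z))"

text \<open>Axioms (A1)-(A4) for a product P on a graded space given abstractly by
 addition ad, zero z, scalar multiplication sc and homogeneous parts H d.\<close>
definition jlsts_ax :: "('x \<Rightarrow> 'x \<Rightarrow> 'x) \<Rightarrow> 'x \<Rightarrow> ('k::field \<Rightarrow> 'x \<Rightarrow> 'x) \<Rightarrow> (nat \<Rightarrow> 'x set)
    \<Rightarrow> 'k \<Rightarrow> ('x \<Rightarrow> 'x \<Rightarrow> 'x \<Rightarrow> 'x) \<Rightarrow> bool" where
  "jlsts_ax ad z sc H \<delta> P \<longleftrightarrow>
    (\<forall>da db dc a b c. a \<in> H da \<longrightarrow> b \<in> H db \<longrightarrow> c \<in> H dc \<longrightarrow>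
        P a b c \<in> H (da + db + dc)
      \<and> P b a c = sc (- \<delta> * sg (da * db)) (P a b c)
      \<and> ad (ad (sc (sg (da * dc)) (P a b c)) (sc (sg (db * da)) (P b c a)))
           (sc (sg (dc * db)) (P c a b)) = z)
  \<and> (\<forall>da db dc dd de a b c d e. a \<in> H da \<longrightarrow> b \<in> H db \<longrightarrow> c \<in> H dc \<longrightarrow>
        d \<in> H dd \<longrightarrow> e \<in> H de \<longrightarrow>
      P a b (P c d e) =
        ad (ad (P (P a b c) d e) (sc (sg (dc * (da + db))) (P c (P a b d) e)))
           (sc (\<delta> * sg ((da + db) * (dc + dd))) (P c d (P a b e))))"

definition jlsts :: "('k::field \<Rightarrow> 'v::ab_group_add \<Rightarrow> 'v) \<Rightarrow> 'v set \<Rightarrow> 'v set \<Rightarrow> 'k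
    \<Rightarrow> ('v \<Rightarrow> 'v \<Rightarrow> 'v \<Rightarrow> 'v) \<Rightarrow> bool" where
  "jlsts sc T0 T1 \<delta> br \<longleftrightarrow> graded_space sc T0 T1 \<and> (\<delta> = 1 \<or> \<delta> = -1) \<and> trilinear sc br
     \<and> jlsts_ax (+) 0 sc (hom T0 T1) \<delta> br"

definition theta :: "('k::field \<Rightarrow> 'v \<Rightarrow> 'v) \<Rightarrow> ('v \<Rightarrow> 'v \<Rightarrow> 'v \<Rightarrow> 'v) \<Rightarrow> 'v \<Rightarrow> nat \<Rightarrow> 'v \<Rightarrow> nat
    \<Rightarrow> 'v \<Rightarrow> nat \<Rightarrow> 'v" where
  "theta sc br a da b db x dx = sc (sg (dx * (da + db))) (br x a b)"

definition Dop :: "('k::field \<Rightarrow> 'v \<Rightarrow> 'v) \<Rightarrow> ('v \<Rightarrow> 'v \<Rightarrow> 'v \<Rightarrow> 'v) \<Rightarrow> 'k \<Rightarrow> 'v \<Rightarrow> 'v \<Rightarrow> 'v \<Rightarrow> 'v" where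
  "Dop sc br \<delta> a b x = sc \<delta> (br a b x)"

definition C3 :: "('k::field \<Rightarrow> 'v::ab_group_add \<Rightarrow> 'v) \<Rightarrow> 'v set \<Rightarrow> 'v set \<Rightarrow> 'k
    \<Rightarrow> ('v \<Rightarrow> 'v \<Rightarrow> 'v \<Rightarrow> 'v) \<Rightarrow> bool" where
  "C3 sc T0 T1 \<delta> f \<longleftrightarrow> trilinear sc f \<and>
    (\<forall>d1 d2 d3 x1 x2 x3. x1 \<in> hom T0 T1 d1 \<longrightarrow> x2 \<in> hom T0 T1 d2 \<longrightarrow> x3 \<in> hom T0 T1 d3 \<longrightarrow>
       f x2 x1 x3 = sc (- \<delta> * sg (d1 * d2)) (f x1 x2 x3)
     \<and> sc (sg (d1 * d3)) (f x1 x2 x3) + sc (sg (d2 * d1)) (f x2 x3 x1)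
         + sc (sg (d3 * d2)) (f x3 x1 x2) = 0)"

text \<open>homogeneous components (of degree e) of a linear / trilinear map, evaluated at
 homogeneous arguments with given degrees\<close>
definition comp1 :: "'v set \<Rightarrow> 'v set \<Rightarrow> ('v::ab_group_add \<Rightarrow> 'v) \<Rightarrow> nat \<Rightarrow> 'v \<Rightarrow> nat \<Rightarrow> 'v" where
  "comp1 T0 T1 g e x d = proj T0 T1 (d + e) (g x)"

definition comp3 :: "'v set \<Rightarrow> 'v set \<Rightarrow> ('v::ab_group_add \<Rightarrow> 'v \<Rightarrow> 'v \<Rightarrow> 'v) \<Rightarrow> nat
    \<Rightarrow> 'v \<Rightarrow> nat \<Rightarrow> 'v \<Rightarrow> nat \<Rightarrow> 'v \<Rightarrow> nat \<Rightarrow> 'v" where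
  "comp3 T0 T1 f e x1 d1 x2 d2 x3 d3 = proj T0 T1 (d1 + d2 + d3 + e) (f x1 x2 x3)"

definition d1hom :: "('k::field \<Rightarrow> 'v::ab_group_add \<Rightarrow> 'v) \<Rightarrow> ('v \<Rightarrow> 'v \<Rightarrow> 'v \<Rightarrow> 'v) \<Rightarrow> 'k
    \<Rightarrow> ('v \<Rightarrow> nat \<Rightarrow> 'v) \<Rightarrow> nat \<Rightarrow> 'v \<Rightarrow> nat \<Rightarrow> 'v \<Rightarrow> nat \<Rightarrow> 'v \<Rightarrow> nat \<Rightarrow> 'v" where
  "d1hom sc br \<delta> g e x1 d1 x2 d2 x3 d3 =
     sc (sg ((e + d1) * (d2 + d3))) (theta sc br x2 d2 x3 d3 (g x1 d1) (e + d1))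
   - g (br x1 x2 x3) (d1 + d2 + d3)
   + sc (\<delta> * sg (e * (d1 + d2))) (Dop sc br \<delta> x1 x2 (g x3 d3))
   - sc (\<delta> * sg (d2 * d3 + e * (d1 + d3))) (theta sc br x1 d1 x3 d3 (g x2 d2) (e + d2))"

definition d3hom :: "('k::field \<Rightarrow> 'v::ab_group_add \<Rightarrow> 'v) \<Rightarrow> ('v \<Rightarrow> 'v \<Rightarrow> 'v \<Rightarrow> 'v) \<Rightarrow> 'k
    \<Rightarrow> ('v \<Rightarrow> nat \<Rightarrow> 'v \<Rightarrow> nat \<Rightarrow> 'v \<Rightarrow> nat \<Rightarrow> 'v) \<Rightarrow> nat
    \<Rightarrow> 'v \<Rightarrow> nat \<Rightarrow> 'v \<Rightarrow> nat \<Rightarrow> 'v \<Rightarrow> nat \<Rightarrow> 'v \<Rightarrow> nat \<Rightarrow> 'v \<Rightarrow> nat \<Rightarrow> 'v" where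
  "d3hom sc br \<delta> f e x1 d1 x2 d2 x3 d3 x4 d4 x5 d5 =
     sc (sg ((e + d1 + d2 + d3) * (d4 + d5)))
        (theta sc br x4 d4 x5 d5 (f x1 d1 x2 d2 x3 d3) (e + d1 + d2 + d3))
   - sc (\<delta> * sg ((e + d1 + d2) * (d3 + d5) + d4 * d5))
        (theta sc br x3 d3 x5 d5 (f x1 d1 x2 d2 x4 d4) (e + d1 + d2 + d4))
   - sc (\<delta> * sg (e * (d1 + d2))) (Dop sc br \<delta> x1 x2 (f x3 d3 x4 d4 x5 d5))
   + sc (sg ((e + d1 + d2) * (d3 + d4))) (Dop sc br \<delta> x3 x4 (f x1 d1 x2 d2 x5 d5))
   + f (br x1 x2 x3) (d1 + d2 + d3) x4 d4 x5 d5
   - f x1 d1 x2 d2 (br x3 x4 x5) (d3 + d4 + d5)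
   + sc (sg (d3 * (d1 + d2))) (f x3 d3 (br x1 x2 x4) (d1 + d2 + d4) x5 d5)
   + sc (\<delta> * sg ((d1 + d2) * (d3 + d4))) (f x3 d3 x4 d4 (br x1 x2 x5) (d1 + d2 + d5))"

text \<open>Z^3: cochains in C^3 whose coboundary (sum of the coboundaries of the even and odd
 components, extended linearly; determined by its values on homogeneous arguments) vanishes\<close>
definition Z3 :: "('k::field \<Rightarrow> 'v::ab_group_add \<Rightarrow> 'v) \<Rightarrow> 'v set \<Rightarrow> 'v set \<Rightarrow> 'k
    \<Rightarrow> ('v \<Rightarrow> 'v \<Rightarrow> 'v \<Rightarrow> 'v) \<Rightarrow> ('v \<Rightarrow> 'v \<Rightarrow> 'v \<Rightarrow> 'v) set" where
  "Z3 sc T0 T1 \<delta> br = {f. C3 sc T0 T1 \<delta> f \<and>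
     (\<forall>d1 d2 d3 d4 d5 x1 x2 x3 x4 x5. x1 \<in> hom T0 T1 d1 \<longrightarrow> x2 \<in> hom T0 T1 d2 \<longrightarrow>
        x3 \<in> hom T0 T1 d3 \<longrightarrow> x4 \<in> hom T0 T1 d4 \<longrightarrow> x5 \<in> hom T0 T1 d5 \<longrightarrow>
        d3hom sc br \<delta> (comp3 T0 T1 f 0) 0 x1 d1 x2 d2 x3 d3 x4 d4 x5 d5
      + d3hom sc br \<delta> (comp3 T0 T1 f 1) 1 x1 d1 x2 d2 x3 d3 x4 d4 x5 d5 = 0)}"

text \<open>B^3 = d^1 C^1: trilinear maps agreeing (on homogeneous arguments, hence everywhere)
 with d^1 g for some linear g\<close>
definition B3 :: "('k::field \<Rightarrow> 'v::ab_group_add \<Rightarrow> 'v) \<Rightarrow> 'v set \<Rightarrow> 'v set \<Rightarrow> 'k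
    \<Rightarrow> ('v \<Rightarrow> 'v \<Rightarrow> 'v \<Rightarrow> 'v) \<Rightarrow> ('v \<Rightarrow> 'v \<Rightarrow> 'v \<Rightarrow> 'v) set" where
  "B3 sc T0 T1 \<delta> br = {f. trilinear sc f \<and> (\<exists>g. Vector_Spaces.linear sc sc g \<and>
     (\<forall>d1 d2 d3 x1 x2 x3. x1 \<in> hom T0 T1 d1 \<longrightarrow> x2 \<in> hom T0 T1 d2 \<longrightarrow> x3 \<in> hom T0 T1 d3 \<longrightarrow>
        f x1 x2 x3 = d1hom sc br \<delta> (comp1 T0 T1 g 0) 0 x1 d1 x2 d2 x3 d3
                   + d1hom sc br \<delta> (comp1 T0 T1 g 1) 1 x1 d1 x2 d2 x3 d3))}"

definition H3_zero :: "('k::field \<Rightarrow> 'v::ab_group_add \<Rightarrow> 'v) \<Rightarrow> 'v set \<Rightarrow> 'v set \<Rightarrow> 'k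
    \<Rightarrow> ('v \<Rightarrow> 'v \<Rightarrow> 'v \<Rightarrow> 'v) \<Rightarrow> bool" where
  "H3_zero sc T0 T1 \<delta> br \<longleftrightarrow> Z3 sc T0 T1 \<delta> br \<subseteq> B3 sc T0 T1 \<delta> br"

definition ps_add :: "(nat \<Rightarrow> 'v::ab_group_add) \<Rightarrow> (nat \<Rightarrow> 'v) \<Rightarrow> nat \<Rightarrow> 'v" where
  "ps_add a b = (\<lambda>n. a n + b n)"

definition ps_scale :: "('k \<Rightarrow> 'v \<Rightarrow> 'v) \<Rightarrow> 'k \<Rightarrow> (nat \<Rightarrow> 'v) \<Rightarrow> nat \<Rightarrow> 'v" where
  "ps_scale sc s a = (\<lambda>n. sc s (a n))"

definition ps_hom :: "'v set \<Rightarrow> 'v set \<Rightarrow> nat \<Rightarrow> (nat \<Rightarrow> 'v) set" where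
  "ps_hom T0 T1 d = {a. \<forall>n. a n \<in> hom T0 T1 d}"

text \<open>K[[t]]-trilinear extension of f_t = sum f_i t^i to T[[t]]\<close>
definition ps_prod :: "(nat \<Rightarrow> 'v \<Rightarrow> 'v \<Rightarrow> 'v \<Rightarrow> 'v::ab_group_add)
    \<Rightarrow> (nat \<Rightarrow> 'v) \<Rightarrow> (nat \<Rightarrow> 'v) \<Rightarrow> (nat \<Rightarrow> 'v) \<Rightarrow> nat \<Rightarrow> 'v" where
  "ps_prod f a b c = (\<lambda>n. \<Sum>i\<le>n. \<Sum>j\<le>n - i. \<Sum>k\<le>n - i - j.
      f i (a j) (b k) (c (n - i - j - k)))"

text \<open>K[[t]]-linear extension of phi_t = sum phi_i t^i to T[[t]]\<close>
definition ps_app :: "(nat \<Rightarrow> 'v \<Rightarrow> 'v::ab_group_add) \<Rightarrow> (nat \<Rightarrow> 'v) \<Rightarrow> nat \<Rightarrow> 'v" where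
  "ps_app \<phi> a = (\<lambda>n. \<Sum>i\<le>n. \<phi> i (a (n - i)))"

definition deformation :: "('k::field \<Rightarrow> 'v::ab_group_add \<Rightarrow> 'v) \<Rightarrow> 'v set \<Rightarrow> 'v set \<Rightarrow> 'k
    \<Rightarrow> ('v \<Rightarrow> 'v \<Rightarrow> 'v \<Rightarrow> 'v) \<Rightarrow> (nat \<Rightarrow> 'v \<Rightarrow> 'v \<Rightarrow> 'v \<Rightarrow> 'v) \<Rightarrow> bool" where
  "deformation sc T0 T1 \<delta> br f \<longleftrightarrow> (\<forall>i. trilinear sc (f i)) \<and> f 0 = br \<and>
     jlsts_ax ps_add (\<lambda>n. 0) (ps_scale sc) (ps_hom T0 T1) \<delta> (ps_prod f)"

definition null_deformation :: "('v \<Rightarrow> 'v \<Rightarrow> 'v \<Rightarrow> 'v::zero) \<Rightarrow> nat \<Rightarrow> 'v \<Rightarrow> 'v \<Rightarrow> 'v \<Rightarrow> 'v" where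
  "null_deformation br = (\<lambda>i. if i = 0 then br else (\<lambda>x y z. 0))"

definition equivalent_deformations :: "('k::field \<Rightarrow> 'v::ab_group_add \<Rightarrow> 'v)
    \<Rightarrow> (nat \<Rightarrow> 'v \<Rightarrow> 'v \<Rightarrow> 'v \<Rightarrow> 'v) \<Rightarrow> (nat \<Rightarrow> 'v \<Rightarrow> 'v \<Rightarrow> 'v \<Rightarrow> 'v) \<Rightarrow> bool" where
  "equivalent_deformations sc f f' \<longleftrightarrow> (\<exists>\<phi>. \<phi> 0 = id \<and> (\<forall>i. Vector_Spaces.linear sc sc (\<phi> i)) \<and>
     (\<forall>a b c. ps_app \<phi> (ps_prod f a b c) = ps_prod f' (ps_app \<phi> a) (ps_app \<phi> b) (ps_app \<phi> c)))"

end

theory Submission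
  imports Defs "HOL-Library.Function_Algebras"
begin

lemma sg_even: "sg n = (if even n then 1 else (-1::'k::field))"
  by (simp add: sg_def)

lemma sg_add: "sg (m + n) = (sg m * sg n :: 'k::field)"
  by (simp add: sg_def power_add)

lemma sg_sq: "sg n * sg n = (1::'k::field)"
  by (simp add: sg_def power_add[symmetric])

lemma sg_cong: "even m = even n \<Longrightarrow> sg m = (sg n :: 'k::field)"
  by (simp add: sg_even)

lemma hom_cong: "even m = even n \<Longrightarrow> hom T0 T1 m = hom T0 T1 n"
  by (simp add: hom_def)

lemma proj_cong: "even m = even n \<Longrightarrow> proj T0 T1 m = proj T0 T1 n"
  unfolding proj_def by (rule ext) (simp add: hom_def)

definition sh :: "(nat \<Rightarrow> 'v::zero) \<Rightarrow> nat \<Rightarrow> 'v" where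
  "sh a = (\<lambda>n. if n = 0 then 0 else a (n - 1))"
definition cst :: "'v::zero \<Rightarrow> nat \<Rightarrow> 'v" where
  "cst x = (\<lambda>n. if n = 0 then x else 0)"
definition stl :: "(nat \<Rightarrow> 'v) \<Rightarrow> nat \<Rightarrow> 'v" where
  "stl a = (\<lambda>n. a (Suc n))"

lemma series_decomp: "a = cst (a 0) + sh (stl a)" for a :: "nat \<Rightarrow> 'v::monoid_add"
  by (rule ext) (simp add: cst_def sh_def stl_def)

definition good1 :: "('k \<Rightarrow> 'v \<Rightarrow> 'v) \<Rightarrow> ((nat \<Rightarrow> 'v::ab_group_add) \<Rightarrow> (nat \<Rightarrow> 'v)) \<Rightarrow> bool" where
  "good1 sc M \<longleftrightarrow> (\<forall>a b. M (a + b) = M a + M b) \<and> (\<forall>s a. M (ps_scale sc s a) = ps_scale sc s (M a))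
     \<and> (\<forall>a. M (sh a) = sh (M a))"

definition good3 :: "('k \<Rightarrow> 'v \<Rightarrow> 'v) \<Rightarrow> ((nat \<Rightarrow> 'v::ab_group_add) \<Rightarrow> (nat \<Rightarrow> 'v) \<Rightarrow> (nat \<Rightarrow> 'v) \<Rightarrow> (nat \<Rightarrow> 'v)) \<Rightarrow> bool" where
  "good3 sc M \<longleftrightarrow> (\<forall>b c. good1 sc (\<lambda>a. M a b c)) \<and> (\<forall>a c. good1 sc (\<lambda>b. M a b c))
     \<and> (\<forall>a b. good1 sc (\<lambda>c. M a b c))"

lemma good1_add: "good1 sc M \<Longrightarrow> M (a + b) = M a + M b" by (simp add: good1_def)
lemma good1_scale: "good1 sc M \<Longrightarrow> M (ps_scale sc s a) = ps_scale sc s (M a)" by (simp add: good1_def)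
lemma good1_sh: "good1 sc M \<Longrightarrow> M (sh a) = sh (M a)" by (simp add: good1_def)
lemma good1_zero: "good1 sc M \<Longrightarrow> M 0 = 0"
  using good1_add[of sc M 0 0] by simp
lemma good1_diff: "good1 sc M \<Longrightarrow> M (a - b) = M a - M b"
  using good1_add[of sc M "a - b" b] by (simp add: algebra_simps)

lemma good1_L1:
  assumes "good1 sc M" "\<And>x m. m < n \<Longrightarrow> M (cst x) m = 0" "m < n"
  shows "M a m = 0"
  using assms(2,3)
proof (induction n arbitrary: a m)
  case 0 then show ?case by simp
next
  case (Suc n)
  have "M a = M (cst (a 0)) + sh (M (stl a))"
    by (subst series_decomp[of a]) (simp add: good1_add[OF assms(1)] good1_sh[OF assms(1)])
  moreover have "sh (M (stl a)) m = 0"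
  proof (cases "m = 0")
    case False
    then have "M (stl a) (m - 1) = 0" using Suc by auto
    then show ?thesis by (simp add: sh_def)
  qed (simp add: sh_def)
  ultimately show ?case using Suc by simp
qed

lemma good1_L2:
  assumes "good1 sc M" "\<And>x m. m < n \<Longrightarrow> M (cst x) m = 0" "0 < n"
  shows "M a n = M (cst (a 0)) n"
proof -
  have "M a = M (cst (a 0)) + sh (M (stl a))"
    by (subst series_decomp[of a]) (simp add: good1_add[OF assms(1)] good1_sh[OF assms(1)])
  moreover have "M (stl a) (n - 1) = 0"
    using good1_L1[OF assms(1,2)] assms(3) by simp
  ultimately show ?thesis using assms(3) by (simp add: sh_def)
qed

lemma good1_L0:
  assumes "good1 sc M"
  shows "M a 0 = M (cst (a 0)) 0"
proof -
  have "M a = M (cst (a 0)) + sh (M (stl a))"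
    by (subst series_decomp[of a]) (simp add: good1_add[OF assms(1)] good1_sh[OF assms(1)])
  then show ?thesis by (simp add: sh_def)
qed

lemma good3_1: "good3 sc M \<Longrightarrow> good1 sc (\<lambda>a. M a b c)" by (simp add: good3_def)
lemma good3_2: "good3 sc M \<Longrightarrow> good1 sc (\<lambda>b. M a b c)" by (simp add: good3_def)
lemma good3_3: "good3 sc M \<Longrightarrow> good1 sc (\<lambda>c. M a b c)" by (simp add: good3_def)

lemma good3_L1:
  assumes "good3 sc M" "\<And>x y z m. m < n \<Longrightarrow> M (cst x) (cst y) (cst z) m = 0" "m < n"
  shows "M a b c m = 0"
proof -
  have h3: "M (cst x) (cst y) c m = 0" if "m < n" for x y c m
    by (rule good1_L1[OF good3_3[OF assms(1)], of n]) (use assms(2) that in auto)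
  have h2: "M (cst x) b c m = 0" if "m < n" for x b c m
    by (rule good1_L1[OF good3_2[OF assms(1)], of n]) (use h3 that in auto)
  show ?thesis
    by (rule good1_L1[OF good3_1[OF assms(1)], of n]) (use h2 assms(3) in auto)
qed

lemma good3_L2:
  assumes "good3 sc M" "\<And>x y z m. m < n \<Longrightarrow> M (cst x) (cst y) (cst z) m = 0" "0 < n"
  shows "M a b c n = M (cst (a 0)) (cst (b 0)) (cst (c 0)) n"
proof -
  have v: "M a b c m = 0" if "m < n" for a b c m using good3_L1[OF assms(1,2) that] .
  have "M a b c n = M (cst (a 0)) b c n"
    by (rule good1_L2[OF good3_1[OF assms(1)] _ assms(3)]) (use v in auto)
  also have "\<dots> = M (cst (a 0)) (cst (b 0)) c n"
    by (rule good1_L2[OF good3_2[OF assms(1)] _ assms(3)]) (use v in auto)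
  also have "\<dots> = M (cst (a 0)) (cst (b 0)) (cst (c 0)) n"
    by (rule good1_L2[OF good3_3[OF assms(1)] _ assms(3)]) (use v in auto)
  finally show ?thesis .
qed

lemma good3_L0:
  assumes "good3 sc M"
  shows "M a b c 0 = M (cst (a 0)) (cst (b 0)) (cst (c 0)) 0"
  using good1_L0[OF good3_1[OF assms]] good1_L0[OF good3_2[OF assms]] good1_L0[OF good3_3[OF assms]]
  by metis

locale jl =
  fixes sc :: "'k::field \<Rightarrow> 'v::ab_group_add \<Rightarrow> 'v"
    and T0 T1 :: "'v set" and \<delta> :: 'k and br :: "'v \<Rightarrow> 'v \<Rightarrow> 'v \<Rightarrow> 'v"
  assumes J: "jlsts sc T0 T1 \<delta> br"
begin

lemma J_parts: "graded_space sc T0 T1" "\<delta> = 1 \<or> \<delta> = -1" "trilinear sc br"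
  "jlsts_ax (+) 0 sc (hom T0 T1) \<delta> br"
  using J unfolding jlsts_def by simp_all

lemma GS_parts: "vector_space sc" "module.subspace sc T0" "module.subspace sc T1" "T0 \<inter> T1 = {0}"
  "\<forall>v. \<exists>a\<in>T0. \<exists>b\<in>T1. v = a + b"
  using J_parts(1) unfolding graded_space_def by simp_all

lemma VS: "vector_space sc" by (rule GS_parts(1))

interpretation vs: vector_space sc by (rule VS)

abbreviation H where "H \<equiv> hom T0 T1"

lemma sub_hom: "vs.subspace (H d)"
  using GS_parts(2,3) by (simp add: hom_def)

lemma H0: "0 \<in> H d" by (rule vs.subspace_0[OF sub_hom])
lemma Hadd: "x \<in> H d \<Longrightarrow> y \<in> H d \<Longrightarrow> x + y \<in> H d" by (rule vs.subspace_add[OF sub_hom])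
lemma Hdiff: "x \<in> H d \<Longrightarrow> y \<in> H d \<Longrightarrow> x - y \<in> H d" by (rule vs.subspace_diff[OF sub_hom])
lemma Hscale: "x \<in> H d \<Longrightarrow> sc c x \<in> H d" by (rule vs.subspace_scale[OF sub_hom])
lemma Hneg: "x \<in> H d \<Longrightarrow> - x \<in> H d" by (rule vs.subspace_neg[OF sub_hom])
lemma Hsum: "(\<And>i. i \<in> A \<Longrightarrow> f i \<in> H d) \<Longrightarrow> sum f A \<in> H d" by (rule vs.subspace_sum[OF sub_hom])

lemma Hcong: "even m = even n \<Longrightarrow> H m = H n" by (rule hom_cong)

lemma Hint: "x \<in> H d \<Longrightarrow> x \<in> H (Suc d) \<Longrightarrow> x = 0"
  using GS_parts(4) by (cases "even d") (auto simp: hom_def)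

lemma Hdecomp: "\<exists>a\<in>H 0. \<exists>b\<in>H 1. v = a + b"
  using GS_parts(5) by (simp add: hom_def)

lemma delta_sq: "\<delta> * \<delta> = 1"
  using J_parts(2) by auto

lemma tri: "trilinear sc br" by (rule J_parts(3))

lemma lin_add: "Vector_Spaces.linear sc sc f \<Longrightarrow> f (x + y) = f x + f y"
  by (simp add: Vector_Spaces.linear_iff)
lemma lin_scale: "Vector_Spaces.linear sc sc f \<Longrightarrow> f (sc c x) = sc c (f x)"
  by (simp add: Vector_Spaces.linear_iff)
lemma lin_zero: "Vector_Spaces.linear sc sc f \<Longrightarrow> f 0 = 0"
  using lin_add[of f 0 0] by simp
lemma lin_diff: "Vector_Spaces.linear sc sc f \<Longrightarrow> f (x - y) = f x - f y"
  using lin_add[of f "x - y" y] by (simp add: algebra_simps)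
lemma lin_sum: "Vector_Spaces.linear sc sc f \<Longrightarrow> f (sum g A) = (\<Sum>i\<in>A. f (g i))"
  by (induction A rule: infinite_finite_induct) (simp_all add: lin_zero lin_add)
lemma linI: "(\<And>x y. f (x + y) = f x + f y) \<Longrightarrow> (\<And>c x. f (sc c x) = sc c (f x)) \<Longrightarrow> Vector_Spaces.linear sc sc f"
  by (simp add: Vector_Spaces.linear_iff VS)

lemma tri_lin1: "trilinear sc f \<Longrightarrow> Vector_Spaces.linear sc sc (\<lambda>x. f x y z)" by (simp add: trilinear_def)
lemma tri_lin2: "trilinear sc f \<Longrightarrow> Vector_Spaces.linear sc sc (\<lambda>y. f x y z)" by (simp add: trilinear_def)
lemma tri_lin3: "trilinear sc f \<Longrightarrow> Vector_Spaces.linear sc sc (\<lambda>z. f x y z)" by (simp add: trilinear_def)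

lemma tri_zero:
  assumes "trilinear sc f"
  shows "f 0 y z = 0" "f x 0 z = 0" "f x y 0 = 0"
  using lin_zero[OF tri_lin1[OF assms]] lin_zero[OF tri_lin2[OF assms]] lin_zero[OF tri_lin3[OF assms]]
  by auto

lemma tri_add:
  assumes "trilinear sc f"
  shows "f (x + x') y z = f x y z + f x' y z" "f x (y + y') z = f x y z + f x y' z"
    "f x y (z + z') = f x y z + f x y z'"
  using lin_add[OF tri_lin1[OF assms]] lin_add[OF tri_lin2[OF assms]] lin_add[OF tri_lin3[OF assms]]
  by auto

lemma tri_diff:
  assumes "trilinear sc f"
  shows "f (x - x') y z = f x y z - f x' y z" "f x (y - y') z = f x y z - f x y' z"
    "f x y (z - z') = f x y z - f x y z'"
  using lin_diff[OF tri_lin1[OF assms]] lin_diff[OF tri_lin2[OF assms]] lin_diff[OF tri_lin3[OF assms]]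
  by auto

lemma tri_scale:
  assumes "trilinear sc f"
  shows "f (sc c x) y z = sc c (f x y z)" "f x (sc c y) z = sc c (f x y z)"
    "f x y (sc c z) = sc c (f x y z)"
  using lin_scale[OF tri_lin1[OF assms]] lin_scale[OF tri_lin2[OF assms]] lin_scale[OF tri_lin3[OF assms]]
  by auto

lemma ax: "jlsts_ax (+) 0 sc H \<delta> br" by (rule J_parts(4))

lemma ax1: "\<forall>da db dc a b c. a \<in> H da \<longrightarrow> b \<in> H db \<longrightarrow> c \<in> H dc \<longrightarrow>
        br a b c \<in> H (da + db + dc)
      \<and> br b a c = sc (- \<delta> * sg (da * db)) (br a b c)
      \<and> (sc (sg (da * dc)) (br a b c) + sc (sg (db * da)) (br b c a)) + sc (sg (dc * db)) (br c a b) = 0"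
  using ax unfolding jlsts_ax_def by (rule conjunct1)

lemma br_deg: assumes "a \<in> H da" "b \<in> H db" "c \<in> H dc" shows "br a b c \<in> H (da + db + dc)"
  by (rule ax1[rule_format, OF assms, THEN conjunct1])

lemma br_A2: assumes "a \<in> H da" "b \<in> H db" "c \<in> H dc" shows "br b a c = sc (- \<delta> * sg (da * db)) (br a b c)"
  by (rule ax1[rule_format, OF assms, THEN conjunct2, THEN conjunct1])

lemma proj_eq:
  assumes "a \<in> H d" "b \<in> H (Suc d)"
  shows "proj T0 T1 d (a + b) = a"
  unfolding proj_def
proof (rule the_equality)
  show "a \<in> H d \<and> a + b - a \<in> H (Suc d)" using assms by simp
next
  fix w assume w: "w \<in> H d \<and> a + b - w \<in> H (Suc d)"
  have 1: "a - w \<in> H d" using w assms by (simp add: Hdiff)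
  have e: "a - w = (a + b - w) - b" by (simp add: algebra_simps)
  have 2: "a - w \<in> H (Suc d)" using Hdiff[OF conjunct2[OF w] assms(2)] unfolding e[symmetric] .
  show "w = a" using Hint[OF 1 2] by simp
qed

lemma proj_id: "a \<in> H d \<Longrightarrow> proj T0 T1 d a = a"
  using proj_eq[of a d 0] H0 by simp

lemma proj_other: "a \<in> H d \<Longrightarrow> proj T0 T1 (Suc d) a = 0"
proof -
  assume a: "a \<in> H d"
  have "a \<in> H (Suc (Suc d))" using a Hcong[of "Suc (Suc d)" d] by simp
  then show ?thesis using proj_eq[of 0 "Suc d" a] H0 by simp
qed

lemma proj_in: "proj T0 T1 d v \<in> H d"
proof -
  obtain a b where ab: "a \<in> H 0" "b \<in> H 1" "v = a + b" using Hdecomp by blast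
  show ?thesis
  proof (cases "even d")
    case True
    then have "H d = H 0" "H (Suc d) = H 1" using Hcong[of d 0] Hcong[of "Suc d" 1] by auto
    then show ?thesis using proj_eq[of a d b] ab by simp
  next
    case False
    then have "H d = H 1" "H (Suc d) = H 0" using Hcong[of d 1] Hcong[of "Suc d" 0] by auto
    then show ?thesis using proj_eq[of b d a] ab by (simp add: add.commute)
  qed
qed

lemma proj_split: "v = proj T0 T1 d v + proj T0 T1 (Suc d) v"
proof -
  obtain a b where ab: "a \<in> H 0" "b \<in> H 1" "v = a + b" using Hdecomp by blast
  show ?thesis
  proof (cases "even d")
    case True
    then have "H d = H 0" "H (Suc d) = H 1" "H (Suc (Suc d)) = H 0" using Hcong[of d 0] Hcong[of "Suc d" 1] Hcong[of "Suc (Suc d)" 0] by auto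
    then show ?thesis using proj_eq[of a d b] proj_eq[of b "Suc d" a] ab by (simp add: add.commute)
  next
    case False
    then have "H d = H 1" "H (Suc d) = H 0" "H (Suc (Suc d)) = H 1" using Hcong[of d 1] Hcong[of "Suc d" 0] Hcong[of "Suc (Suc d)" 1] by auto
    then show ?thesis using proj_eq[of b d a] proj_eq[of a "Suc d" b] ab by (simp add: add.commute)
  qed
qed

lemma proj_lin: "Vector_Spaces.linear sc sc (proj T0 T1 d)"
proof (rule linI)
  let ?p = "proj T0 T1 d" and ?q = "proj T0 T1 (Suc d)"
  fix x y
  have "(?p x + ?q x) + (?p y + ?q y) = (?p x + ?p y) + (?q x + ?q y)" by (simp add: algebra_simps)
  then have "x + y = (?p x + ?p y) + (?q x + ?q y)"
    by (simp only: proj_split[of _ d, symmetric])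
  then show "?p (x + y) = ?p x + ?p y"
    using proj_eq[of "?p x + ?p y" d "?q x + ?q y"] by (simp add: Hadd proj_in)
next
  let ?p = "proj T0 T1 d" and ?q = "proj T0 T1 (Suc d)"
  fix c x
  have "sc c (?p x + ?q x) = sc c (?p x) + sc c (?q x)" by (rule vs.scale_right_distrib)
  then have eq: "sc c x = sc c (?p x) + sc c (?q x)"
    using proj_split[of x d, symmetric] by simp
  have "?p (sc c (?p x) + sc c (?q x)) = sc c (?p x)"
    by (rule proj_eq[OF Hscale[OF proj_in] Hscale[OF proj_in]])
  then show "?p (sc c x) = sc c (?p x)"
    unfolding eq[symmetric] .
qed

end

lemma drop1: "(K (Suc n) :: 'a::comm_monoid_add) = 0 \<Longrightarrow> (\<Sum>i\<le>Suc n. K i) = (\<Sum>i\<le>n. K i)"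
  by simp

lemma drop2:
  fixes K :: "nat \<Rightarrow> nat \<Rightarrow> 'a::comm_monoid_add"
  assumes "\<And>i j. i + j = Suc n \<Longrightarrow> K i j = 0"
  shows "(\<Sum>i\<le>Suc n. \<Sum>j\<le>Suc n - i. K i j) = (\<Sum>i\<le>n. \<Sum>j\<le>n - i. K i j)"
proof -
  have "(\<Sum>i\<le>Suc n. \<Sum>j\<le>Suc n - i. K i j) = (\<Sum>i\<le>n. \<Sum>j\<le>Suc n - i. K i j)"
    using assms[of "Suc n" 0] by simp
  also have "\<dots> = (\<Sum>i\<le>n. \<Sum>j\<le>n - i. K i j)"
  proof (rule sum.cong[OF refl])
    fix i assume "i \<in> {..n}"
    then have "Suc n - i = Suc (n - i)" by auto
    moreover have "K i (Suc (n - i)) = 0" using assms \<open>i \<in> {..n}\<close> by auto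
    ultimately show "(\<Sum>j\<le>Suc n - i. K i j) = (\<Sum>j\<le>n - i. K i j)" by simp
  qed
  finally show ?thesis .
qed

lemma drop3:
  fixes K :: "nat \<Rightarrow> nat \<Rightarrow> nat \<Rightarrow> 'a::comm_monoid_add"
  assumes "\<And>i j k. i + j + k = Suc n \<Longrightarrow> K i j k = 0"
  shows "(\<Sum>i\<le>Suc n. \<Sum>j\<le>Suc n - i. \<Sum>k\<le>Suc n - i - j. K i j k)
       = (\<Sum>i\<le>n. \<Sum>j\<le>n - i. \<Sum>k\<le>n - i - j. K i j k)"
proof -
  have "(\<Sum>i\<le>Suc n. \<Sum>j\<le>Suc n - i. \<Sum>k\<le>Suc n - i - j. K i j k)
       = (\<Sum>i\<le>n. \<Sum>j\<le>n - i. \<Sum>k\<le>Suc n - i - j. K i j k)"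
    by (rule drop2) (use assms in auto)
  also have "\<dots> = (\<Sum>i\<le>n. \<Sum>j\<le>n - i. \<Sum>k\<le>n - i - j. K i j k)"
  proof (rule sum.cong[OF refl], rule sum.cong[OF refl])
    fix i j assume "i \<in> {..n}" "j \<in> {..n - i}"
    then have "Suc n - i - j = Suc (n - i - j)" by auto
    moreover have "K i j (Suc (n - i - j)) = 0" using assms \<open>i \<in> {..n}\<close> \<open>j \<in> {..n - i}\<close> by auto
    ultimately show "(\<Sum>k\<le>Suc n - i - j. K i j k) = (\<Sum>k\<le>n - i - j. K i j k)" by simp
  qed
  finally show ?thesis .
qed

lemma shiftA:
  fixes G :: "nat \<Rightarrow> nat \<Rightarrow> 'a::comm_monoid_add"
  assumes "\<And>i. G i 0 = 0"
  shows "(\<Sum>i\<le>Suc n. \<Sum>j\<le>Suc n - i. G i j) = (\<Sum>i\<le>n. \<Sum>j\<le>n - i. G i (Suc j))"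
proof -
  have "(\<Sum>i\<le>Suc n. \<Sum>j\<le>Suc n - i. G i j) = (\<Sum>i\<le>n. \<Sum>j\<le>Suc n - i. G i j)"
    using assms[of "Suc n"] by simp
  also have "\<dots> = (\<Sum>i\<le>n. \<Sum>j\<le>n - i. G i (Suc j))"
  proof (rule sum.cong[OF refl])
    fix i assume "i \<in> {..n}"
    then have "Suc n - i = Suc (n - i)" by auto
    then have "(\<Sum>j\<le>Suc n - i. G i j) = (\<Sum>j\<le>Suc (n - i). G i j)" by simp
    also have "\<dots> = G i 0 + (\<Sum>j\<le>n - i. G i (Suc j))" by (rule sum.atMost_Suc_shift)
    finally show "(\<Sum>j\<le>Suc n - i. G i j) = (\<Sum>j\<le>n - i. G i (Suc j))"
      using assms[of i] by simp
  qed
  finally show ?thesis .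
qed

lemma shift1:
  fixes G :: "nat \<Rightarrow> 'a::comm_monoid_add"
  assumes "G 0 = 0"
  shows "(\<Sum>k\<le>Suc m. G k) = (\<Sum>k\<le>m. G (Suc k))"
  unfolding sum.atMost_Suc_shift using assms by simp

lemma sum_single:
  assumes "finite A" "x \<in> A" "\<And>y. y \<in> A \<Longrightarrow> y \<noteq> x \<Longrightarrow> f y = (0::'a::comm_monoid_add)"
  shows "sum f A = f x"
proof -
  have "sum f A = f x + sum f (A - {x})" by (rule sum.remove[OF assms(1,2)])
  also have "sum f (A - {x}) = 0" using assms(3) by (intro sum.neutral) auto
  finally show ?thesis by simp
qed

lemma delta3:
  fixes g :: "nat \<Rightarrow> nat \<Rightarrow> nat \<Rightarrow> 'a::comm_monoid_add"
  assumes n: "i0 + j0 + k0 \<le> n"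
    and z: "\<And>i j k. i \<le> n \<Longrightarrow> j \<le> n - i \<Longrightarrow> k \<le> n - i - j \<Longrightarrow> (i, j, k) \<noteq> (i0, j0, k0) \<Longrightarrow> g i j k = 0"
  shows "(\<Sum>i\<le>n. \<Sum>j\<le>n - i. \<Sum>k\<le>n - i - j. g i j k) = g i0 j0 k0"
proof -
  have i0: "i0 \<in> {..n}" and j0: "j0 \<in> {..n - i0}" and k0: "k0 \<in> {..n - i0 - j0}" using n by auto
  have "(\<Sum>i\<le>n. \<Sum>j\<le>n - i. \<Sum>k\<le>n - i - j. g i j k) = (\<Sum>j\<le>n - i0. \<Sum>k\<le>n - i0 - j. g i0 j k)"
    by (rule sum_single[OF _ i0]) (use z in \<open>auto intro!: sum.neutral\<close>)
  also have "\<dots> = (\<Sum>k\<le>n - i0 - j0. g i0 j0 k)"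
    by (rule sum_single[OF _ j0]) (use z i0 in \<open>auto intro!: sum.neutral\<close>)
  also have "\<dots> = g i0 j0 k0"
    by (rule sum_single[OF _ k0]) (use z i0 j0 in auto)
  finally show ?thesis .
qed

lemma zero3:
  fixes g :: "nat \<Rightarrow> nat \<Rightarrow> nat \<Rightarrow> 'a::comm_monoid_add"
  assumes "\<And>i j k. i \<le> n \<Longrightarrow> j \<le> n - i \<Longrightarrow> k \<le> n - i - j \<Longrightarrow> g i j k = 0"
  shows "(\<Sum>i\<le>n. \<Sum>j\<le>n - i. \<Sum>k\<le>n - i - j. g i j k) = 0"
  using assms by (auto intro!: sum.neutral)

sublocale jl \<subseteq> vs: vector_space sc by (rule VS)

context jl begin

lemma ps_add_eq: "ps_add a b = a + b" by (rule ext) (simp add: ps_add_def)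

lemma ps_scale_add: "ps_scale sc s (a + b) = ps_scale sc s a + ps_scale sc s b"
  by (rule ext) (simp add: ps_scale_def vs.scale_right_distrib)
lemma ps_scale_diff: "ps_scale sc s (a - b) = ps_scale sc s a - ps_scale sc s b"
  by (rule ext) (simp add: ps_scale_def vs.scale_right_diff_distrib)
lemma ps_scale_zero: "ps_scale sc s 0 = 0"
  by (rule ext) (simp add: ps_scale_def)
lemma ps_scale_sh: "ps_scale sc s (sh a) = sh (ps_scale sc s a)"
  by (rule ext) (simp add: ps_scale_def sh_def)
lemma sh_add: "sh (a + b) = sh a + sh b" for a b :: "nat \<Rightarrow> 'v"
  by (rule ext) (simp add: sh_def)
lemma sh_diff: "sh (a - b) = sh a - sh b" for a b :: "nat \<Rightarrow> 'v"
  by (rule ext) (simp add: sh_def)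
lemma cst_add: "cst (x + y) = cst x + cst y" for x y :: 'v
  by (rule ext) (simp add: cst_def)
lemma cst_diff: "cst (x - y) = cst x - cst y" for x y :: 'v
  by (rule ext) (simp add: cst_def)
lemma cst_scale: "cst (sc s x) = ps_scale sc s (cst x)"
  by (rule ext) (simp add: cst_def ps_scale_def)
lemma cst_zero: "cst 0 = (0 :: nat \<Rightarrow> 'v)"
  by (rule ext) (simp add: cst_def)

lemma good1_comp: "good1 sc M \<Longrightarrow> good1 sc N \<Longrightarrow> good1 sc (\<lambda>a. M (N a))"
  by (simp add: good1_def)

lemma good1_minus: "good1 sc M \<Longrightarrow> good1 sc N \<Longrightarrow> good1 sc (\<lambda>a. M a - N a)"
  by (simp add: good1_def ps_scale_diff sh_diff algebra_simps)

lemma good3_post: "good3 sc P \<Longrightarrow> good1 sc \<Phi> \<Longrightarrow> good3 sc (\<lambda>a b c. \<Phi> (P a b c))"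
  unfolding good3_def by (auto intro: good1_comp[of \<Phi>])

lemma good3_pre: "good3 sc P \<Longrightarrow> good1 sc \<Phi> \<Longrightarrow> good3 sc (\<lambda>a b c. P (\<Phi> a) (\<Phi> b) (\<Phi> c))"
  unfolding good3_def by (auto intro: good1_comp[of _ \<Phi>])

lemma good3_minus: "good3 sc P \<Longrightarrow> good3 sc P' \<Longrightarrow> good3 sc (\<lambda>a b c. P a b c - P' a b c)"
  unfolding good3_def by (auto intro: good1_minus)

lemma good_app:
  assumes lin: "\<And>i. Vector_Spaces.linear sc sc (\<phi> i)"
  shows "good1 sc (ps_app \<phi>)"
  unfolding good1_def
proof (intro conjI allI)
  fix a b
  show "ps_app \<phi> (a + b) = ps_app \<phi> a + ps_app \<phi> b"
    by (rule ext) (simp add: ps_app_def lin_add[OF lin] sum.distrib)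
next
  fix s a
  show "ps_app \<phi> (ps_scale sc s a) = ps_scale sc s (ps_app \<phi> a)"
    by (rule ext) (simp add: ps_app_def ps_scale_def lin_scale[OF lin] vs.scale_sum_right)
next
  fix a
  show "ps_app \<phi> (sh a) = sh (ps_app \<phi> a)"
  proof (rule ext)
    fix n show "ps_app \<phi> (sh a) n = sh (ps_app \<phi> a) n"
    proof (cases n)
      case 0 then show ?thesis by (simp add: ps_app_def sh_def lin_zero[OF lin])
    next
      case (Suc m)
      have "ps_app \<phi> (sh a) (Suc m) = (\<Sum>i\<le>m. \<phi> i (sh a (Suc m - i)))"
        by (simp add: ps_app_def sh_def lin_zero[OF lin])
      also have "\<dots> = (\<Sum>i\<le>m. \<phi> i (a (m - i)))"
        by (rule sum.cong[OF refl]) (simp add: sh_def Suc_diff_le)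
      finally show ?thesis using Suc by (simp add: sh_def ps_app_def)
    qed
  qed
qed

lemma good_prod:
  assumes tr: "\<And>i. trilinear sc (f i)"
  shows "good3 sc (ps_prod f)"
proof -
  note z = tri_zero[OF tr] and ad = tri_add[OF tr] and scl = tri_scale[OF tr]
  have A: "good1 sc (\<lambda>a. ps_prod f a b c)" for b c
    unfolding good1_def
  proof (intro conjI allI)
    fix a a' show "ps_prod f (a + a') b c = ps_prod f a b c + ps_prod f a' b c"
      by (rule ext) (simp add: ps_prod_def ad sum.distrib)
  next
    fix s a show "ps_prod f (ps_scale sc s a) b c = ps_scale sc s (ps_prod f a b c)"
      by (rule ext) (simp add: ps_prod_def ps_scale_def scl vs.scale_sum_right)
  next
    fix a show "ps_prod f (sh a) b c = sh (ps_prod f a b c)"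
    proof (rule ext)
      fix n show "ps_prod f (sh a) b c n = sh (ps_prod f a b c) n"
      proof (cases n)
        case 0 then show ?thesis by (simp add: ps_prod_def sh_def z)
      next
        case (Suc m)
        have "ps_prod f (sh a) b c (Suc m) = (\<Sum>i\<le>Suc m. \<Sum>j\<le>Suc m - i. (\<Sum>k\<le>Suc m - i - j. f i (sh a j) (b k) (c (Suc m - i - j - k))))"
          by (simp add: ps_prod_def)
        also have "\<dots> = (\<Sum>i\<le>m. \<Sum>j\<le>m - i. (\<Sum>k\<le>Suc m - i - Suc j. f i (sh a (Suc j)) (b k) (c (Suc m - i - Suc j - k))))"
          by (rule shiftA) (simp add: sh_def z)
        also have "\<dots> = ps_prod f a b c m"
          by (simp add: ps_prod_def sh_def)
        finally show ?thesis using Suc by (simp add: sh_def)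
      qed
    qed
  qed
  have B: "good1 sc (\<lambda>b. ps_prod f a b c)" for a c
    unfolding good1_def
  proof (intro conjI allI)
    fix b b' show "ps_prod f a (b + b') c = ps_prod f a b c + ps_prod f a b' c"
      by (rule ext) (simp add: ps_prod_def ad sum.distrib)
  next
    fix s b show "ps_prod f a (ps_scale sc s b) c = ps_scale sc s (ps_prod f a b c)"
      by (rule ext) (simp add: ps_prod_def ps_scale_def scl vs.scale_sum_right)
  next
    fix b show "ps_prod f a (sh b) c = sh (ps_prod f a b c)"
    proof (rule ext)
      fix n show "ps_prod f a (sh b) c n = sh (ps_prod f a b c) n"
      proof (cases n)
        case 0 then show ?thesis by (simp add: ps_prod_def sh_def z)
      next
        case (Suc m)
        have "ps_prod f a (sh b) c (Suc m) = (\<Sum>i\<le>Suc m. \<Sum>j\<le>Suc m - i. (\<Sum>k\<le>Suc m - i - j. f i (a j) (sh b k) (c (Suc m - i - j - k))))"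
          by (simp add: ps_prod_def)
        also have "\<dots> = (\<Sum>i\<le>m. \<Sum>j\<le>m - i. (\<Sum>k\<le>Suc m - i - j. f i (a j) (sh b k) (c (Suc m - i - j - k))))"
        proof (rule drop2)
          fix i j assume "i + j = Suc m"
          then have "Suc m - i - j = 0" by simp
          then show "(\<Sum>k\<le>Suc m - i - j. f i (a j) (sh b k) (c (Suc m - i - j - k))) = 0"
            by (simp add: sh_def z)
        qed
        also have "\<dots> = (\<Sum>i\<le>m. \<Sum>j\<le>m - i. (\<Sum>k\<le>m - i - j. f i (a j) (b k) (c (m - i - j - k))))"
        proof (rule sum.cong[OF refl], rule sum.cong[OF refl])
          fix i j assume "i \<in> {..m}" "j \<in> {..m - i}"
          then have e: "Suc m - i - j = Suc (m - i - j)" by auto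
          show "(\<Sum>k\<le>Suc m - i - j. f i (a j) (sh b k) (c (Suc m - i - j - k))) = (\<Sum>k\<le>m - i - j. f i (a j) (b k) (c (m - i - j - k)))"
            unfolding e by (subst shift1) (simp_all add: sh_def z)
        qed
        finally show ?thesis using Suc by (simp add: sh_def ps_prod_def)
      qed
    qed
  qed
  have C: "good1 sc (\<lambda>c. ps_prod f a b c)" for a b
    unfolding good1_def
  proof (intro conjI allI)
    fix c c' show "ps_prod f a b (c + c') = ps_prod f a b c + ps_prod f a b c'"
      by (rule ext) (simp add: ps_prod_def ad sum.distrib)
  next
    fix s c show "ps_prod f a b (ps_scale sc s c) = ps_scale sc s (ps_prod f a b c)"
      by (rule ext) (simp add: ps_prod_def ps_scale_def scl vs.scale_sum_right)
  next
    fix c show "ps_prod f a b (sh c) = sh (ps_prod f a b c)"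
    proof (rule ext)
      fix n show "ps_prod f a b (sh c) n = sh (ps_prod f a b c) n"
      proof (cases n)
        case 0 then show ?thesis by (simp add: ps_prod_def sh_def z)
      next
        case (Suc m)
        have "ps_prod f a b (sh c) (Suc m) = (\<Sum>i\<le>Suc m. \<Sum>j\<le>Suc m - i. (\<Sum>k\<le>Suc m - i - j. f i (a j) (b k) (sh c (Suc m - i - j - k))))"
          by (simp add: ps_prod_def)
        also have "\<dots> = (\<Sum>i\<le>m. \<Sum>j\<le>m - i. (\<Sum>k\<le>m - i - j. f i (a j) (b k) (sh c (Suc m - i - j - k))))"
        proof (rule drop3)
          fix i j k assume "i + j + k = Suc m"
          then have "Suc m - i - j - k = 0" by simp
          then show "f i (a j) (b k) (sh c (Suc m - i - j - k)) = 0"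
            by (simp add: sh_def z)
        qed
        also have "\<dots> = (\<Sum>i\<le>m. \<Sum>j\<le>m - i. (\<Sum>k\<le>m - i - j. f i (a j) (b k) (c (m - i - j - k))))"
        proof (rule sum.cong[OF refl], rule sum.cong[OF refl], rule sum.cong[OF refl])
          fix i j k assume "i \<in> {..m}" "j \<in> {..m - i}" "k \<in> {..m - i - j}"
          then have e: "Suc m - i - j - k = Suc (m - i - j - k)" by auto
          show "f i (a j) (b k) (sh c (Suc m - i - j - k)) = f i (a j) (b k) (c (m - i - j - k))"
            unfolding e by (simp add: sh_def)
        qed
        finally show ?thesis using Suc by (simp add: sh_def ps_prod_def)
      qed
    qed
  qed
  show ?thesis unfolding good3_def using A B C by blast
qed

lemma app_cst:
  assumes lin: "\<And>i. Vector_Spaces.linear sc sc (\<phi> i)"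
  shows "ps_app \<phi> (cst x) n = \<phi> n x"
proof -
  have "ps_app \<phi> (cst x) n = (\<Sum>i\<le>n. \<phi> i (cst x (n - i)))" by (simp add: ps_app_def)
  also have "\<dots> = \<phi> n (cst x (n - n))"
    by (rule sum_single) (auto simp: cst_def lin_zero[OF lin])
  finally show ?thesis by (simp add: cst_def)
qed

lemma prod_cst:
  assumes tr: "\<And>i. trilinear sc (f i)"
  shows "ps_prod f (cst x) (cst y) (cst z) n = f n x y z"
proof -
  note zz = tri_zero[OF tr]
  have "ps_prod f (cst x) (cst y) (cst z) n = (\<Sum>i\<le>n. \<Sum>j\<le>n - i. \<Sum>k\<le>n - i - j. f i (cst x j) (cst y k) (cst z (n - i - j - k)))"
    by (simp add: ps_prod_def)
  also have "\<dots> = f n (cst x 0) (cst y 0) (cst z (n - n - 0 - 0))"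
    by (rule delta3) (auto simp: cst_def zz)
  finally show ?thesis by (simp add: cst_def)
qed

definition B where "B = ps_prod (null_deformation br)"

lemma null_tri: "trilinear sc (null_deformation br i)"
proof (cases "i = 0")
  case True then show ?thesis by (simp add: null_deformation_def tri)
next
  case False then show ?thesis by (simp add: null_deformation_def trilinear_def Vector_Spaces.linear_iff VS)
qed

lemma good_B: "good3 sc B" unfolding B_def by (rule good_prod[OF null_tri])

lemma B_cst: "B (cst x) (cst y) (cst z) n = (if n = 0 then br x y z else 0)"
  unfolding B_def prod_cst[OF null_tri] by (simp add: null_deformation_def)

lemma B_ccX: "B (cst x) (cst y) X n = br x y (X n)"
proof -
  note zz = tri_zero[OF tri]
  have "B (cst x) (cst y) X n = (\<Sum>i\<le>n. \<Sum>j\<le>n - i. \<Sum>k\<le>n - i - j. null_deformation br i (cst x j) (cst y k) (X (n - i - j - k)))"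
    by (simp add: B_def ps_prod_def)
  also have "\<dots> = null_deformation br 0 (cst x 0) (cst y 0) (X (n - 0 - 0 - 0))"
    by (rule delta3) (auto simp: cst_def zz null_deformation_def)
  finally show ?thesis by (simp add: cst_def null_deformation_def)
qed

lemma B_cXc: "B (cst x) X (cst y) n = br x (X n) y"
proof -
  note zz = tri_zero[OF tri]
  have "B (cst x) X (cst y) n = (\<Sum>i\<le>n. \<Sum>j\<le>n - i. \<Sum>k\<le>n - i - j. null_deformation br i (cst x j) (X k) (cst y (n - i - j - k)))"
    by (simp add: B_def ps_prod_def)
  also have "\<dots> = null_deformation br 0 (cst x 0) (X n) (cst y (n - 0 - 0 - n))"
    by (rule delta3) (auto simp: cst_def zz null_deformation_def)
  finally show ?thesis by (simp add: cst_def null_deformation_def)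
qed

lemma B_Xcc: "B X (cst x) (cst y) n = br (X n) x y"
proof -
  note zz = tri_zero[OF tri]
  have "B X (cst x) (cst y) n = (\<Sum>i\<le>n. \<Sum>j\<le>n - i. \<Sum>k\<le>n - i - j. null_deformation br i (X j) (cst x k) (cst y (n - i - j - k)))"
    by (simp add: B_def ps_prod_def)
  also have "\<dots> = null_deformation br 0 (X n) (cst x 0) (cst y (n - 0 - n - 0))"
    by (rule delta3) (auto simp: cst_def zz null_deformation_def)
  finally show ?thesis by (simp add: cst_def null_deformation_def)
qed

end

function psinv :: "(nat \<Rightarrow> 'v \<Rightarrow> 'v::ab_group_add) \<Rightarrow> (nat \<Rightarrow> 'v) \<Rightarrow> nat \<Rightarrow> 'v" where
  "psinv \<phi> u n = u n - (\<Sum>i\<in>{1..n}. \<phi> i (psinv \<phi> u (n - i)))"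
  by auto
termination by (relation "measure (\<lambda>(\<phi>, u, n). n)") auto

declare psinv.simps [simp del]

lemma sum_split0: "(\<Sum>i\<le>n. g i) = g 0 + (\<Sum>i\<in>{1..n}. g i)" for g :: "nat \<Rightarrow> 'a::comm_monoid_add"
proof -
  have "{..n} = insert 0 {1..n}" by auto
  then show ?thesis by simp
qed

lemma good1_inv:
  assumes "good1 sc M" "\<And>a. N (M a) = a" "\<And>u. M (N u) = u"
  shows "good1 sc N"
  unfolding good1_def
proof (intro conjI allI)
  fix u v
  have "N (u + v) = N (M (N u) + M (N v))" by (simp add: assms(3))
  also have "\<dots> = N u + N v" by (simp add: good1_add[OF assms(1), symmetric] assms(2))
  finally show "N (u + v) = N u + N v" .
next
  fix s u
  have "N (ps_scale sc s u) = N (ps_scale sc s (M (N u)))" by (simp add: assms(3))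
  also have "\<dots> = ps_scale sc s (N u)" by (simp add: good1_scale[OF assms(1), symmetric] assms(2))
  finally show "N (ps_scale sc s u) = ps_scale sc s (N u)" .
next
  fix u
  have "N (sh u) = N (sh (M (N u)))" by (simp add: assms(3))
  also have "\<dots> = sh (N u)" by (simp add: good1_sh[OF assms(1), symmetric] assms(2))
  finally show "N (sh u) = sh (N u)" .
qed

context jl begin

lemma inv_right:
  assumes "\<phi> 0 = id"
  shows "ps_app \<phi> (psinv \<phi> u) = u"
proof (rule ext)
  fix n
  have "ps_app \<phi> (psinv \<phi> u) n = psinv \<phi> u n + (\<Sum>i\<in>{1..n}. \<phi> i (psinv \<phi> u (n - i)))"
    unfolding ps_app_def sum_split0 by (simp add: assms)
  also have "\<dots> = u n" by (subst (1) psinv.simps) simp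
  finally show "ps_app \<phi> (psinv \<phi> u) n = u n" .
qed

lemma inv_left:
  assumes "\<phi> 0 = id"
  shows "psinv \<phi> (ps_app \<phi> a) = a"
proof (rule ext)
  fix n show "psinv \<phi> (ps_app \<phi> a) n = a n"
  proof (induction n rule: less_induct)
    case (less n)
    have "psinv \<phi> (ps_app \<phi> a) n = ps_app \<phi> a n - (\<Sum>i\<in>{1..n}. \<phi> i (psinv \<phi> (ps_app \<phi> a) (n - i)))"
      by (subst psinv.simps) simp
    also have "(\<Sum>i\<in>{1..n}. \<phi> i (psinv \<phi> (ps_app \<phi> a) (n - i))) = (\<Sum>i\<in>{1..n}. \<phi> i (a (n - i)))"
      by (rule sum.cong[OF refl]) (simp add: less)
    also have "ps_app \<phi> a n = a n + (\<Sum>i\<in>{1..n}. \<phi> i (a (n - i)))"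
      unfolding ps_app_def sum_split0 by (simp add: assms)
    finally show ?case by simp
  qed
qed

lemma app_hom:
  assumes "\<And>i x. x \<in> H d \<Longrightarrow> \<phi> i x \<in> H d" "a \<in> ps_hom T0 T1 d"
  shows "ps_app \<phi> a \<in> ps_hom T0 T1 d"
  using assms unfolding ps_hom_def ps_app_def by (auto intro!: Hsum)

lemma inv_hom:
  assumes "\<And>i x. x \<in> H d \<Longrightarrow> \<phi> i x \<in> H d" "u \<in> ps_hom T0 T1 d"
  shows "psinv \<phi> u \<in> ps_hom T0 T1 d"
  unfolding ps_hom_def
proof (intro CollectI allI)
  fix n show "psinv \<phi> u n \<in> H d"
  proof (induction n rule: less_induct)
    case (less n)
    show ?case
      apply (subst psinv.simps)
      apply (rule Hdiff)
      using assms(2) apply (simp add: ps_hom_def)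
      apply (rule Hsum)
      apply (rule assms(1))
      apply (rule less)
      apply auto
      done
  qed
qed

lemma fun_zero_eq: "(\<lambda>n. 0) = (0 :: nat \<Rightarrow> 'v)" by (rule ext) simp

lemma transport:
  assumes P: "jlsts_ax ps_add (\<lambda>n. 0) (ps_scale sc) (ps_hom T0 T1) \<delta> P"
    and Madd: "\<And>a b. M (a + b) = M a + M b"
    and Mscale: "\<And>s a. M (ps_scale sc s a) = ps_scale sc s (M a)"
    and NM: "\<And>a. N (M a) = a"
    and Mhom: "\<And>a d. a \<in> ps_hom T0 T1 d \<Longrightarrow> M a \<in> ps_hom T0 T1 d"
    and Nhom: "\<And>a d. a \<in> ps_hom T0 T1 d \<Longrightarrow> N a \<in> ps_hom T0 T1 d"
  shows "jlsts_ax ps_add (\<lambda>n. 0) (ps_scale sc) (ps_hom T0 T1) \<delta> (\<lambda>a b c. M (P (N a) (N b) (N c)))"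
proof -
  have M0: "M 0 = 0" using Madd[of 0 0] by simp
  have P1: "\<And>da db dc a b c. a \<in> ps_hom T0 T1 da \<Longrightarrow> b \<in> ps_hom T0 T1 db \<Longrightarrow> c \<in> ps_hom T0 T1 dc \<Longrightarrow>
        P a b c \<in> ps_hom T0 T1 (da + db + dc)
      \<and> P b a c = ps_scale sc (- \<delta> * sg (da * db)) (P a b c)
      \<and> ps_add (ps_add (ps_scale sc (sg (da * dc)) (P a b c)) (ps_scale sc (sg (db * da)) (P b c a)))
           (ps_scale sc (sg (dc * db)) (P c a b)) = (\<lambda>n. 0)"
    using P unfolding jlsts_ax_def by blast
  have P2: "\<And>da db dc dd de a b c d e. a \<in> ps_hom T0 T1 da \<Longrightarrow> b \<in> ps_hom T0 T1 db \<Longrightarrow> c \<in> ps_hom T0 T1 dc \<Longrightarrow>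
        d \<in> ps_hom T0 T1 dd \<Longrightarrow> e \<in> ps_hom T0 T1 de \<Longrightarrow>
      P a b (P c d e) =
        ps_add (ps_add (P (P a b c) d e) (ps_scale sc (sg (dc * (da + db))) (P c (P a b d) e)))
           (ps_scale sc (\<delta> * sg ((da + db) * (dc + dd))) (P c d (P a b e)))"
    using P unfolding jlsts_ax_def by blast
  show ?thesis
    unfolding jlsts_ax_def
  proof (intro conjI allI impI)
    fix da db dc a b c
    assume h: "a \<in> ps_hom T0 T1 da" "b \<in> ps_hom T0 T1 db" "c \<in> ps_hom T0 T1 dc"
    note p = P1[OF Nhom[OF h(1)] Nhom[OF h(2)] Nhom[OF h(3)]]
    show "M (P (N a) (N b) (N c)) \<in> ps_hom T0 T1 (da + db + dc)"
      using p by (auto intro: Mhom)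
    show "M (P (N b) (N a) (N c)) = ps_scale sc (- \<delta> * sg (da * db)) (M (P (N a) (N b) (N c)))"
      using p by (simp add: Mscale)
    have "ps_add (ps_add (ps_scale sc (sg (da * dc)) (M (P (N a) (N b) (N c))))
        (ps_scale sc (sg (db * da)) (M (P (N b) (N c) (N a)))))
        (ps_scale sc (sg (dc * db)) (M (P (N c) (N a) (N b))))
      = M (ps_add (ps_add (ps_scale sc (sg (da * dc)) (P (N a) (N b) (N c)))
        (ps_scale sc (sg (db * da)) (P (N b) (N c) (N a))))
        (ps_scale sc (sg (dc * db)) (P (N c) (N a) (N b))))"
      by (simp add: ps_add_eq Madd Mscale)
    also have "\<dots> = (\<lambda>n. 0)" using p by (simp add: fun_zero_eq M0)
    finally show "ps_add (ps_add (ps_scale sc (sg (da * dc)) (M (P (N a) (N b) (N c))))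
        (ps_scale sc (sg (db * da)) (M (P (N b) (N c) (N a)))))
        (ps_scale sc (sg (dc * db)) (M (P (N c) (N a) (N b)))) = (\<lambda>n. 0)" .
  next
    fix da db dc dd de a b c d e
    assume h: "a \<in> ps_hom T0 T1 da" "b \<in> ps_hom T0 T1 db" "c \<in> ps_hom T0 T1 dc"
      "d \<in> ps_hom T0 T1 dd" "e \<in> ps_hom T0 T1 de"
    note p = P2[OF Nhom[OF h(1)] Nhom[OF h(2)] Nhom[OF h(3)] Nhom[OF h(4)] Nhom[OF h(5)]]
    show "M (P (N a) (N b) (N (M (P (N c) (N d) (N e))))) =
        ps_add (ps_add (M (P (N (M (P (N a) (N b) (N c)))) (N d) (N e)))
          (ps_scale sc (sg (dc * (da + db))) (M (P (N c) (N (M (P (N a) (N b) (N d)))) (N e)))))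
         (ps_scale sc (\<delta> * sg ((da + db) * (dc + dd))) (M (P (N c) (N d) (N (M (P (N a) (N b) (N e)))))))"
      unfolding NM p by (simp add: ps_add_eq Madd Mscale)
  qed
qed

end

lemma sg_plus2: "sg (a + 2 * b) = (sg a :: 'k::field)"
  by (rule sg_cong) simp

context jl begin

lemma Hmem: "x \<in> H m \<Longrightarrow> m = n \<Longrightarrow> x \<in> H n" by simp

lemma br_deg': "a \<in> H da \<Longrightarrow> b \<in> H db \<Longrightarrow> c \<in> H dc \<Longrightarrow> da + db + dc = n \<Longrightarrow> br a b c \<in> H n"
  using br_deg by blast

lemma comp3_0:
  assumes "\<And>x y z dx dy dz. x \<in> H dx \<Longrightarrow> y \<in> H dy \<Longrightarrow> z \<in> H dz \<Longrightarrow> F x y z \<in> H (dx + dy + dz)"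
    "x1 \<in> H d1" "x2 \<in> H d2" "x3 \<in> H d3"
  shows "comp3 T0 T1 F 0 x1 d1 x2 d2 x3 d3 = F x1 x2 x3"
  unfolding comp3_def using proj_id[OF assms(1)[OF assms(2-4)]] by simp

lemma comp3_1:
  assumes "\<And>x y z dx dy dz. x \<in> H dx \<Longrightarrow> y \<in> H dy \<Longrightarrow> z \<in> H dz \<Longrightarrow> F x y z \<in> H (dx + dy + dz)"
    "x1 \<in> H d1" "x2 \<in> H d2" "x3 \<in> H d3"
  shows "comp3 T0 T1 F 1 x1 d1 x2 d2 x3 d3 = 0"
  unfolding comp3_def using proj_other[OF assms(1)[OF assms(2-4)]] by simp

lemma d3_zero:
  assumes Fdeg: "\<And>x y z dx dy dz. x \<in> H dx \<Longrightarrow> y \<in> H dy \<Longrightarrow> z \<in> H dz \<Longrightarrow> F x y z \<in> H (dx + dy + dz)"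
    and A4: "\<And>a b c d e da db dc dd de. a \<in> H da \<Longrightarrow> b \<in> H db \<Longrightarrow> c \<in> H dc \<Longrightarrow> d \<in> H dd \<Longrightarrow> e \<in> H de \<Longrightarrow>
      br a b (F c d e) + F a b (br c d e) =
        (br (F a b c) d e + F (br a b c) d e)
        + sc (sg (dc * (da + db))) (br c (F a b d) e + F c (br a b d) e)
        + sc (\<delta> * sg ((da + db) * (dc + dd))) (br c d (F a b e) + F c d (br a b e))"
    and h: "x1 \<in> H d1" "x2 \<in> H d2" "x3 \<in> H d3" "x4 \<in> H d4" "x5 \<in> H d5"
  shows "d3hom sc br \<delta> (comp3 T0 T1 F 0) 0 x1 d1 x2 d2 x3 d3 x4 d4 x5 d5
       + d3hom sc br \<delta> (comp3 T0 T1 F 1) 1 x1 d1 x2 d2 x3 d3 x4 d4 x5 d5 = 0"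
proof -
  have c0: "comp3 T0 T1 F 0 x dx y dy z dz = F x y z" if "x \<in> H dx" "y \<in> H dy" "z \<in> H dz" for x y z dx dy dz
    unfolding comp3_def using proj_id[OF Fdeg[OF that]] by simp
  have c1: "comp3 T0 T1 F 1 x dx y dy z dz = 0" if "x \<in> H dx" "y \<in> H dy" "z \<in> H dz" for x y z dx dy dz
    unfolding comp3_def using proj_other[OF Fdeg[OF that]] by simp
  have b123: "br x1 x2 x3 \<in> H (d1 + d2 + d3)" "br x3 x4 x5 \<in> H (d3 + d4 + d5)"
    "br x1 x2 x4 \<in> H (d1 + d2 + d4)" "br x1 x2 x5 \<in> H (d1 + d2 + d5)"
    using h by (auto intro: br_deg)
  have part1: "d3hom sc br \<delta> (comp3 T0 T1 F 1) 1 x1 d1 x2 d2 x3 d3 x4 d4 x5 d5 = 0"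
    unfolding d3hom_def c1[OF h(1-3)] c1[OF h(1,2,4)] c1[OF h(3-5)] c1[OF h(1,2,5)]
      c1[OF b123(1) h(4,5)] c1[OF h(1,2) b123(2)] c1[OF h(3) b123(3) h(5)] c1[OF h(3,4) b123(4)]
    by (simp add: theta_def Dop_def tri_zero[OF tri])
  have F124: "F x1 x2 x4 \<in> H (d1 + d2 + d4)" using Fdeg h by blast
  have e1: "sc (sg ((0 + d1 + d2 + d3) * (d4 + d5))) (theta sc br x4 d4 x5 d5 (F x1 x2 x3) (0 + d1 + d2 + d3))
      = br (F x1 x2 x3) x4 x5"
    by (simp add: theta_def sg_sq)
  have e2: "sc (\<delta> * sg ((0 + d1 + d2) * (d3 + d5) + d4 * d5)) (theta sc br x3 d3 x5 d5 (F x1 x2 x4) (0 + d1 + d2 + d4))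
      = - sc (sg (d3 * (d1 + d2))) (br x3 (F x1 x2 x4) x5)"
  proof -
    have A2: "br (F x1 x2 x4) x3 x5 = sc (- \<delta> * sg (d3 * (d1 + d2 + d4))) (br x3 (F x1 x2 x4) x5)"
      by (rule br_A2[OF h(3) F124 h(5)])
    let ?X = "(0 + d1 + d2) * (d3 + d5) + d4 * d5" and ?Y = "(0 + d1 + d2 + d4) * (d3 + d5)"
      and ?Z = "d3 * (d1 + d2 + d4)"
    have eqn: "?X + ?Y + ?Z = d3 * (d1 + d2) + 2 * ((d1 + d2) * (d3 + d5) + d4 * d5 + d3 * d4)"
      by (simp add: algebra_simps)
    have s: "sg (?X + ?Y + ?Z) = (sg (d3 * (d1 + d2)) :: 'k)"
      by (simp only: eqn sg_plus2)
    have sc1: "\<delta> * sg ?X * (sg ?Y * (- \<delta> * sg ?Z)) = - (\<delta> * \<delta>) * (sg ?X * sg ?Y * sg ?Z)"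
      by (simp add: algebra_simps)
    also have "\<dots> = - sg (d3 * (d1 + d2))"
      using s by (simp add: delta_sq sg_add)
    finally have sc2: "\<delta> * sg ?X * (sg ?Y * (- \<delta> * sg ?Z)) = - sg (d3 * (d1 + d2))" .
    have "sc (\<delta> * sg ?X) (theta sc br x3 d3 x5 d5 (F x1 x2 x4) (0 + d1 + d2 + d4))
       = sc (\<delta> * sg ?X) (sc (sg ?Y) (sc (- \<delta> * sg ?Z) (br x3 (F x1 x2 x4) x5)))"
      by (simp only: theta_def A2)
    also have "\<dots> = sc (\<delta> * sg ?X * (sg ?Y * (- \<delta> * sg ?Z))) (br x3 (F x1 x2 x4) x5)"
      by (simp only: vs.scale_scale)
    also have "\<dots> = - sc (sg (d3 * (d1 + d2))) (br x3 (F x1 x2 x4) x5)"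
      by (simp only: sc2 vs.scale_minus_left)
    finally show ?thesis .
  qed
  have e3: "sc (\<delta> * sg (0 * (d1 + d2))) (Dop sc br \<delta> x1 x2 (F x3 x4 x5)) = br x1 x2 (F x3 x4 x5)"
    by (simp add: Dop_def sg_def delta_sq mult.assoc[symmetric])
  have e4: "sc (sg ((0 + d1 + d2) * (d3 + d4))) (Dop sc br \<delta> x3 x4 (F x1 x2 x5))
      = sc (\<delta> * sg ((d1 + d2) * (d3 + d4))) (br x3 x4 (F x1 x2 x5))"
    by (simp add: Dop_def mult.commute)
  have part0: "d3hom sc br \<delta> (comp3 T0 T1 F 0) 0 x1 d1 x2 d2 x3 d3 x4 d4 x5 d5 =
      br (F x1 x2 x3) x4 x5 + sc (sg (d3 * (d1 + d2))) (br x3 (F x1 x2 x4) x5)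
      - br x1 x2 (F x3 x4 x5) + sc (\<delta> * sg ((d1 + d2) * (d3 + d4))) (br x3 x4 (F x1 x2 x5))
      + F (br x1 x2 x3) x4 x5 - F x1 x2 (br x3 x4 x5)
      + sc (sg (d3 * (d1 + d2))) (F x3 (br x1 x2 x4) x5)
      + sc (\<delta> * sg ((d1 + d2) * (d3 + d4))) (F x3 x4 (br x1 x2 x5))"
    unfolding d3hom_def c0[OF h(1-3)] c0[OF h(1,2,4)] c0[OF h(3-5)] c0[OF h(1,2,5)]
      c0[OF b123(1) h(4,5)] c0[OF h(1,2) b123(2)] c0[OF h(3) b123(3) h(5)] c0[OF h(3,4) b123(4)]
    unfolding e1 e2 e3 e4 by simp
  have a4: "br x1 x2 (F x3 x4 x5) = (br (F x1 x2 x3) x4 x5 + F (br x1 x2 x3) x4 x5)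
        + sc (sg (d3 * (d1 + d2))) (br x3 (F x1 x2 x4) x5 + F x3 (br x1 x2 x4) x5)
        + sc (\<delta> * sg ((d1 + d2) * (d3 + d4))) (br x3 x4 (F x1 x2 x5) + F x3 x4 (br x1 x2 x5))
        - F x1 x2 (br x3 x4 x5)"
    using A4[OF h] by (simp add: algebra_simps)
  show ?thesis unfolding part1 part0 a4
    by (simp add: vs.scale_right_distrib algebra_simps)
qed

end

context jl begin

definition evpart :: "('v \<Rightarrow> 'v) \<Rightarrow> 'v \<Rightarrow> 'v" where
  "evpart g = (\<lambda>x. proj T0 T1 0 (g (proj T0 T1 0 x)) + proj T0 T1 1 (g (proj T0 T1 1 x)))"

lemma ev_hom:
  assumes g: "Vector_Spaces.linear sc sc g" and x: "x \<in> H d"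
  shows "evpart g x = proj T0 T1 d (g x)"
proof (cases "even d")
  case True
  then have x0: "x \<in> H 0" using x Hcong[of d 0] by simp
  have "proj T0 T1 1 x = 0" using proj_other[OF x0] by simp
  moreover have "proj T0 T1 d = proj T0 T1 0" using True by (intro proj_cong) simp
  ultimately show ?thesis
    by (simp add: evpart_def proj_id[OF x0] lin_zero[OF g] lin_zero[OF proj_lin])
next
  case False
  then have x1: "x \<in> H 1" using x Hcong[of d 1] by simp
  have "proj T0 T1 (Suc 1) x = 0" by (rule proj_other[OF x1])
  moreover have "proj T0 T1 (Suc 1) = proj T0 T1 0" by (intro proj_cong) simp
  moreover have "proj T0 T1 d = proj T0 T1 1" using False by (intro proj_cong) simp
  moreover have "proj T0 T1 1 x = x" by (rule proj_id[OF x1])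
  ultimately show ?thesis
    by (simp add: evpart_def lin_zero[OF g] lin_zero[OF proj_lin])
qed

lemma ev_lin:
  assumes g: "Vector_Spaces.linear sc sc g"
  shows "Vector_Spaces.linear sc sc (evpart g)"
  by (rule linI) (simp_all add: evpart_def lin_add[OF g] lin_add[OF proj_lin] lin_scale[OF g]
      lin_scale[OF proj_lin] vs.scale_right_distrib)

lemma ev_pres:
  assumes g: "Vector_Spaces.linear sc sc g" and x: "x \<in> H d"
  shows "evpart g x \<in> H d"
  using ev_hom[OF g x] proj_in by simp

lemma d1_0:
  assumes g: "Vector_Spaces.linear sc sc g"
    and h: "x1 \<in> H d1" "x2 \<in> H d2" "x3 \<in> H d3"
  shows "d1hom sc br \<delta> (comp1 T0 T1 g 0) 0 x1 d1 x2 d2 x3 d3 =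
     br (evpart g x1) x2 x3 + br x1 (evpart g x2) x3 + br x1 x2 (evpart g x3) - evpart g (br x1 x2 x3)"
proof -
  have cm: "comp1 T0 T1 g 0 x d = evpart g x" if "x \<in> H d" for x d
    unfolding comp1_def using ev_hom[OF g that] by simp
  have b: "br x1 x2 x3 \<in> H (d1 + d2 + d3)" using h by (rule br_deg)
  have g2: "evpart g x2 \<in> H d2" by (rule ev_pres[OF g h(2)])
  have t1: "sc (sg ((0 + d1) * (d2 + d3))) (theta sc br x2 d2 x3 d3 (evpart g x1) (0 + d1)) = br (evpart g x1) x2 x3"
    by (simp add: theta_def sg_sq)
  have t3: "sc (\<delta> * sg (0 * (d1 + d2))) (Dop sc br \<delta> x1 x2 (evpart g x3)) = br x1 x2 (evpart g x3)"
    by (simp add: Dop_def sg_def delta_sq mult.assoc[symmetric])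
  have t4: "sc (\<delta> * sg (d2 * d3 + 0 * (d1 + d3))) (theta sc br x1 d1 x3 d3 (evpart g x2) (0 + d2))
      = - br x1 (evpart g x2) x3"
  proof -
    have A2: "br (evpart g x2) x1 x3 = sc (- \<delta> * sg (d1 * d2)) (br x1 (evpart g x2) x3)"
      by (rule br_A2[OF h(1) g2 h(3)])
    let ?X = "d2 * d3 + 0 * (d1 + d3)" and ?Y = "(0 + d2) * (d1 + d3)" and ?Z = "d1 * d2"
    have eqn: "?X + ?Y + ?Z = 0 + 2 * (d2 * d3 + d1 * d2)"
      by (simp add: algebra_simps)
    have s: "sg (?X + ?Y + ?Z) = (1 :: 'k)"
      by (simp only: eqn sg_plus2) (simp add: sg_def)
    have sc1: "\<delta> * sg ?X * (sg ?Y * (- \<delta> * sg ?Z)) = - (\<delta> * \<delta>) * (sg ?X * sg ?Y * sg ?Z)"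
      by (simp add: algebra_simps)
    also have "\<dots> = - 1"
      using s by (simp add: delta_sq sg_add)
    finally have sc2: "\<delta> * sg ?X * (sg ?Y * (- \<delta> * sg ?Z)) = - 1" .
    have "sc (\<delta> * sg ?X) (theta sc br x1 d1 x3 d3 (evpart g x2) (0 + d2))
       = sc (\<delta> * sg ?X) (sc (sg ?Y) (sc (- \<delta> * sg ?Z) (br x1 (evpart g x2) x3)))"
      by (simp only: theta_def A2)
    also have "\<dots> = sc (\<delta> * sg ?X * (sg ?Y * (- \<delta> * sg ?Z))) (br x1 (evpart g x2) x3)"
      by (simp only: vs.scale_scale)
    also have "\<dots> = - br x1 (evpart g x2) x3"
      by (simp only: sc2 vs.scale_minus_left vs.scale_one)
    finally show ?thesis .
  qed
  show ?thesis
    unfolding d1hom_def cm[OF h(1)] cm[OF h(2)] cm[OF h(3)] cm[OF b] t1 t3 t4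
    by (simp add: algebra_simps)
qed

lemma d1_0_hom:
  assumes g: "Vector_Spaces.linear sc sc g"
    and h: "x1 \<in> H d1" "x2 \<in> H d2" "x3 \<in> H d3"
  shows "br (evpart g x1) x2 x3 + br x1 (evpart g x2) x3 + br x1 x2 (evpart g x3) - evpart g (br x1 x2 x3)
     \<in> H (d1 + d2 + d3)"
  by (intro Hadd Hdiff br_deg h ev_pres[OF g] br_deg)

lemma d1_1:
  assumes g: "Vector_Spaces.linear sc sc g"
    and h: "x1 \<in> H d1" "x2 \<in> H d2" "x3 \<in> H d3"
  shows "d1hom sc br \<delta> (comp1 T0 T1 g 1) 1 x1 d1 x2 d2 x3 d3 \<in> H (Suc (d1 + d2 + d3))"
proof -
  have m1: "br (proj T0 T1 (d1 + 1) (g x1)) x2 x3 \<in> H (Suc (d1 + d2 + d3))"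
    by (rule br_deg'[OF proj_in h(2) h(3)]) simp
  have m2: "proj T0 T1 (d1 + d2 + d3 + 1) (g (br x1 x2 x3)) \<in> H (Suc (d1 + d2 + d3))"
    using proj_in[of "d1 + d2 + d3 + 1"] by simp
  have m3: "br x1 x2 (proj T0 T1 (d3 + 1) (g x3)) \<in> H (Suc (d1 + d2 + d3))"
    by (rule br_deg'[OF h(1) h(2) proj_in]) simp
  have m4: "br (proj T0 T1 (d2 + 1) (g x2)) x1 x3 \<in> H (Suc (d1 + d2 + d3))"
    by (rule br_deg'[OF proj_in h(1) h(3)]) simp
  show ?thesis
    unfolding d1hom_def theta_def Dop_def comp1_def
    by (intro Hadd Hdiff Hscale m1 m2 m3 m4)
qed

lemma B3_analysis:
  assumes g: "Vector_Spaces.linear sc sc g"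
    and h: "x1 \<in> H d1" "x2 \<in> H d2" "x3 \<in> H d3"
    and Fm: "F x1 x2 x3 \<in> H (d1 + d2 + d3)"
    and Fe: "F x1 x2 x3 = d1hom sc br \<delta> (comp1 T0 T1 g 0) 0 x1 d1 x2 d2 x3 d3
                   + d1hom sc br \<delta> (comp1 T0 T1 g 1) 1 x1 d1 x2 d2 x3 d3"
  shows "F x1 x2 x3 = br (evpart g x1) x2 x3 + br x1 (evpart g x2) x3 + br x1 x2 (evpart g x3) - evpart g (br x1 x2 x3)"
proof -
  let ?A = "d1hom sc br \<delta> (comp1 T0 T1 g 0) 0 x1 d1 x2 d2 x3 d3"
  let ?C = "d1hom sc br \<delta> (comp1 T0 T1 g 1) 1 x1 d1 x2 d2 x3 d3"
  have A: "?A \<in> H (d1 + d2 + d3)" unfolding d1_0[OF g h] by (rule d1_0_hom[OF g h])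
  have "?C = F x1 x2 x3 - ?A" using Fe by (simp add: algebra_simps)
  then have "?C \<in> H (d1 + d2 + d3)" using Hdiff[OF Fm A] by simp
  then have "?C = 0" using Hint d1_1[OF g h] by blast
  then show ?thesis using Fe d1_0[OF g h] by simp
qed

lemma ext_hom:
  assumes a1: "\<And>x x' y z. G (x + x') y z = G x y z + G x' y z"
    and a2: "\<And>x y y' z. G x (y + y') z = G x y z + G x y' z"
    and a3: "\<And>x y z z'. G x y (z + z') = G x y z + G x y z'"
    and z: "\<And>x y z dx dy dz. x \<in> H dx \<Longrightarrow> y \<in> H dy \<Longrightarrow> z \<in> H dz \<Longrightarrow> G x y z = (0::'v)"
  shows "G x y z = 0"
proof -
  obtain x0 x1 where x: "x0 \<in> H 0" "x1 \<in> H 1" "x = x0 + x1" using Hdecomp by blast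
  obtain y0 y1 where y: "y0 \<in> H 0" "y1 \<in> H 1" "y = y0 + y1" using Hdecomp by blast
  obtain z0 z1 where zz: "z0 \<in> H 0" "z1 \<in> H 1" "z = z0 + z1" using Hdecomp by blast
  have "G x y z = G x0 y z + G x1 y z" unfolding x(3) by (rule a1)
  also have "G x0 y z = G x0 y0 z + G x0 y1 z" unfolding y(3) by (rule a2)
  also have "G x1 y z = G x1 y0 z + G x1 y1 z" unfolding y(3) by (rule a2)
  finally have "G x y z = (G x0 y0 z + G x0 y1 z) + (G x1 y0 z + G x1 y1 z)" .
  moreover have "G u v z = 0" if "u \<in> H du" "v \<in> H dv" for u v du dv
    unfolding zz(3) a3 using z[OF that zz(1)] z[OF that zz(2)] by simp
  ultimately show ?thesis using x y by simp
qed

end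

locale jd = jl sc T0 T1 \<delta> br
  for sc :: "'k::field \<Rightarrow> 'v::ab_group_add \<Rightarrow> 'v" and T0 T1 \<delta> br +
  fixes f :: "nat \<Rightarrow> 'v \<Rightarrow> 'v \<Rightarrow> 'v \<Rightarrow> 'v"
  assumes DEF: "deformation sc T0 T1 \<delta> br f"
begin

lemma f_tri: "trilinear sc (f i)" using DEF by (simp add: deformation_def)
lemma f0: "f 0 = br" using DEF by (simp add: deformation_def)
lemma P_ax: "jlsts_ax ps_add (\<lambda>n. 0) (ps_scale sc) (ps_hom T0 T1) \<delta> (ps_prod f)"
  using DEF by (simp add: deformation_def)
lemma good_P: "good3 sc (ps_prod f)" by (rule good_prod[OF f_tri])

definition Efun :: "(nat \<Rightarrow> 'v \<Rightarrow> 'v) \<Rightarrow> (nat \<Rightarrow> 'v) \<Rightarrow> (nat \<Rightarrow> 'v) \<Rightarrow> (nat \<Rightarrow> 'v) \<Rightarrow> nat \<Rightarrow> 'v" where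
  "Efun \<phi> a b c = ps_app \<phi> (ps_prod f a b c) - B (ps_app \<phi> a) (ps_app \<phi> b) (ps_app \<phi> c)"

definition adm :: "(nat \<Rightarrow> 'v \<Rightarrow> 'v) \<Rightarrow> bool" where
  "adm \<phi> \<longleftrightarrow> \<phi> 0 = id \<and> (\<forall>i. Vector_Spaces.linear sc sc (\<phi> i)) \<and> (\<forall>i d x. x \<in> H d \<longrightarrow> \<phi> i x \<in> H d)"

lemma adm_lin: "adm \<phi> \<Longrightarrow> Vector_Spaces.linear sc sc (\<phi> i)" by (simp add: adm_def)
lemma adm_id: "adm \<phi> \<Longrightarrow> \<phi> 0 = id" by (simp add: adm_def)
lemma adm_pres: "adm \<phi> \<Longrightarrow> x \<in> H d \<Longrightarrow> \<phi> i x \<in> H d" by (simp add: adm_def)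

lemma E_good: assumes "adm \<phi>" shows "good3 sc (Efun \<phi>)"
proof -
  have g: "good1 sc (ps_app \<phi>)" by (rule good_app[OF adm_lin[OF assms]])
  have 1: "good3 sc (\<lambda>a b c. ps_app \<phi> (ps_prod f a b c))" by (rule good3_post[OF good_P g])
  have 2: "good3 sc (\<lambda>a b c. B (ps_app \<phi> a) (ps_app \<phi> b) (ps_app \<phi> c))" by (rule good3_pre[OF good_B g])
  have "Efun \<phi> = (\<lambda>a b c. ps_app \<phi> (ps_prod f a b c) - B (ps_app \<phi> a) (ps_app \<phi> b) (ps_app \<phi> c))"
    by (intro ext) (simp add: Efun_def)
  then show ?thesis using good3_minus[OF 1 2] by simp
qed

lemma app_0: "\<phi> 0 = id \<Longrightarrow> ps_app \<phi> X 0 = X 0"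
  by (simp add: ps_app_def)

lemma B_0: "B u v w 0 = br (u 0) (v 0) (w 0)"
  by (simp add: B_def ps_prod_def null_deformation_def)

lemma P_0: "ps_prod f u v w 0 = br (u 0) (v 0) (w 0)"
  by (simp add: ps_prod_def f0)

lemma E_0: assumes "adm \<phi>" shows "Efun \<phi> a b c 0 = 0"
proof -
  have "\<phi> 0 = id" by (rule adm_id[OF assms])
  then show ?thesis unfolding Efun_def by (simp add: app_0 B_0 P_0)
qed

lemma B_causal:
  assumes "\<And>j. j \<le> m \<Longrightarrow> u j = u' j" "\<And>j. j \<le> m \<Longrightarrow> v j = v' j" "\<And>j. j \<le> m \<Longrightarrow> w j = w' j"
  shows "B u v w m = B u' v' w' m"
  unfolding B_def ps_prod_def
  by (intro sum.cong refl) (simp add: assms)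

lemma app_causal:
  assumes "\<And>i. i \<le> m \<Longrightarrow> \<phi> i = \<phi>' i"
  shows "ps_app \<phi> X m = ps_app \<phi>' X m"
  unfolding ps_app_def by (intro sum.cong refl) (simp add: assms)

lemma E_causal:
  assumes "\<And>i. i \<le> m \<Longrightarrow> \<phi> i = \<phi>' i"
  shows "Efun \<phi> a b c m = Efun \<phi>' a b c m"
proof -
  have "B (ps_app \<phi> a) (ps_app \<phi> b) (ps_app \<phi> c) m = B (ps_app \<phi>' a) (ps_app \<phi>' b) (ps_app \<phi>' c) m"
    by (rule B_causal) (auto intro!: app_causal assms)
  then show ?thesis unfolding Efun_def by (simp add: app_causal[OF assms])
qed

lemma B_supp1:
  assumes "\<And>m. m \<noteq> N \<Longrightarrow> X m = 0"
  shows "B X v w N = br (X N) (v 0) (w 0)"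
proof -
  note zz = tri_zero[OF tri]
  have "B X v w N = (\<Sum>i\<le>N. \<Sum>j\<le>N - i. \<Sum>k\<le>N - i - j. null_deformation br i (X j) (v k) (w (N - i - j - k)))"
    by (simp add: B_def ps_prod_def)
  also have "\<dots> = null_deformation br 0 (X N) (v 0) (w (N - 0 - N - 0))"
    by (rule delta3) (auto simp: assms zz null_deformation_def)
  finally show ?thesis by (simp add: null_deformation_def)
qed

lemma B_supp2:
  assumes "\<And>m. m \<noteq> N \<Longrightarrow> X m = 0"
  shows "B u X w N = br (u 0) (X N) (w 0)"
proof -
  note zz = tri_zero[OF tri]
  have "B u X w N = (\<Sum>i\<le>N. \<Sum>j\<le>N - i. \<Sum>k\<le>N - i - j. null_deformation br i (u j) (X k) (w (N - i - j - k)))"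
    by (simp add: B_def ps_prod_def)
  also have "\<dots> = null_deformation br 0 (u 0) (X N) (w (N - 0 - 0 - N))"
    by (rule delta3) (auto simp: assms zz null_deformation_def)
  finally show ?thesis by (simp add: null_deformation_def)
qed

lemma B_supp3:
  assumes "\<And>m. m \<noteq> N \<Longrightarrow> X m = 0"
  shows "B u v X N = br (u 0) (v 0) (X N)"
proof -
  note zz = tri_zero[OF tri]
  have "B u v X N = (\<Sum>i\<le>N. \<Sum>j\<le>N - i. \<Sum>k\<le>N - i - j. null_deformation br i (u j) (v k) (X (N - i - j - k)))"
    by (simp add: B_def ps_prod_def)
  also have "\<dots> = null_deformation br 0 (u 0) (v 0) (X (N - 0 - 0 - 0))"
    by (rule delta3) (auto simp: assms zz null_deformation_def)
  finally show ?thesis by (simp add: null_deformation_def)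
qed

lemma app_upd:
  assumes "\<psi> N = (\<lambda>x. 0)"
  shows "ps_app (\<psi>(N := g)) X N = ps_app \<psi> X N + g (X 0)"
proof -
  have s: "{..N} = insert N {..<N}" by auto
  have "ps_app (\<psi>(N := g)) X N = g (X 0) + (\<Sum>i<N. \<psi> i (X (N - i)))"
    unfolding ps_app_def s by (simp add: sum.insert)
  moreover have "ps_app \<psi> X N = (\<Sum>i<N. \<psi> i (X (N - i)))"
    unfolding ps_app_def s by (simp add: sum.insert assms)
  ultimately show ?thesis by (simp add: add.commute)
qed

lemma cst_hom: "x \<in> H d \<Longrightarrow> cst x \<in> ps_hom T0 T1 d"
  by (simp add: ps_hom_def cst_def H0)

lemma E_cst_add:
  assumes "adm \<phi>"
  shows "Efun \<phi> (cst (x + x')) (cst y) (cst z) n = Efun \<phi> (cst x) (cst y) (cst z) n + Efun \<phi> (cst x') (cst y) (cst z) n"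
    "Efun \<phi> (cst x) (cst (y + y')) (cst z) n = Efun \<phi> (cst x) (cst y) (cst z) n + Efun \<phi> (cst x) (cst y') (cst z) n"
    "Efun \<phi> (cst x) (cst y) (cst (z + z')) n = Efun \<phi> (cst x) (cst y) (cst z) n + Efun \<phi> (cst x) (cst y) (cst z') n"
  using good1_add[OF good3_1[OF E_good[OF assms]]] good1_add[OF good3_2[OF E_good[OF assms]]]
    good1_add[OF good3_3[OF E_good[OF assms]]]
  by (simp_all add: cst_add)

lemma E_cst_scale:
  assumes "adm \<phi>"
  shows "Efun \<phi> (cst (sc s x)) (cst y) (cst z) n = sc s (Efun \<phi> (cst x) (cst y) (cst z) n)"
    "Efun \<phi> (cst x) (cst (sc s y)) (cst z) n = sc s (Efun \<phi> (cst x) (cst y) (cst z) n)"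
    "Efun \<phi> (cst x) (cst y) (cst (sc s z)) n = sc s (Efun \<phi> (cst x) (cst y) (cst z) n)"
  using good1_scale[OF good3_1[OF E_good[OF assms]]] good1_scale[OF good3_2[OF E_good[OF assms]]]
    good1_scale[OF good3_3[OF E_good[OF assms]]]
  by (simp_all add: cst_scale ps_scale_def)

end

context jd begin

lemma step:
  assumes H3: "H3_zero sc T0 T1 \<delta> br" and adm: "adm \<psi>" and \<psi>N: "\<psi> N = (\<lambda>x. 0)" and Npos: "0 < N"
    and van: "\<And>x y z m. m < N \<Longrightarrow> Efun \<psi> (cst x) (cst y) (cst z) m = 0"
  shows "\<exists>g. Vector_Spaces.linear sc sc g \<and> (\<forall>d x. x \<in> H d \<longrightarrow> g x \<in> H d)
     \<and> (\<forall>x y z. Efun (\<psi>(N := g)) (cst x) (cst y) (cst z) N = 0)"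
proof -
  let ?Psi = "ps_app \<psi>" and ?Ni = "psinv \<psi>"
  have lin: "\<And>i. Vector_Spaces.linear sc sc (\<psi> i)" using adm by (simp add: adm_def)
  have id0: "\<psi> 0 = id" using adm by (simp add: adm_def)
  have gPsi: "good1 sc ?Psi" by (rule good_app[OF lin])
  have NM: "\<And>a. ?Ni (?Psi a) = a" by (rule inv_left[of \<psi>, OF id0])
  have MN: "\<And>u. ?Psi (?Ni u) = u" by (rule inv_right[of \<psi>, OF id0])
  have gN: "good1 sc ?Ni" by (rule good1_inv[OF gPsi NM MN])
  define E where "E = Efun \<psi>"
  have gE: "good3 sc E" unfolding E_def by (rule E_good[OF adm])
  have Ev: "\<And>a b c m. m < N \<Longrightarrow> E a b c m = 0"
    by (rule good3_L1[OF gE]) (auto simp: E_def van)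
  define F where "F x y z = E (cst x) (cst y) (cst z) N" for x y z
  have EN: "\<And>a b c. E a b c N = F (a 0) (b 0) (c 0)"
    unfolding F_def by (rule good3_L2[OF gE _ Npos]) (auto simp: E_def van)
  have Ni0: "\<And>u. ?Ni u 0 = u 0" by (subst psinv.simps) simp
  define Q where "Q a b c = ?Psi (ps_prod f (?Ni a) (?Ni b) (?Ni c))" for a b c
  have pres: "\<And>i x d. x \<in> H d \<Longrightarrow> \<psi> i x \<in> H d" using adm by (simp add: adm_def)
  have Qax: "jlsts_ax ps_add (\<lambda>n. 0) (ps_scale sc) (ps_hom T0 T1) \<delta> Q"
    unfolding Q_def
    by (rule transport[OF P_ax good1_add[OF gPsi] good1_scale[OF gPsi] NM app_hom[OF pres] inv_hom[OF pres]])
  have QB: "Q u v w = B u v w + E (?Ni u) (?Ni v) (?Ni w)" for u v w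
    unfolding Q_def E_def Efun_def MN by simp
  have Q0: "Q u v w 0 = br (u 0) (v 0) (w 0)" for u v w
    unfolding QB using Ev[OF Npos] by (simp add: B_0)
  have QN: "Q u v w N = B u v w N + F (u 0) (v 0) (w 0)" for u v w
    unfolding QB by (simp add: EN Ni0)
  have Bc: "B (cst x) (cst y) (cst z) N = 0" for x y z using Npos by (simp add: B_cst)
  have Qc: "Q (cst x) (cst y) (cst z) N = F x y z" for x y z
    unfolding QN Bc by (simp add: cst_def)
  have Qc0: "Q (cst x) (cst y) (cst z) 0 = br x y z" for x y z
    unfolding Q0 by (simp add: cst_def)
  have QQ3: "Q (cst a) (cst b) (Q (cst c) (cst d) (cst e)) N = br a b (F c d e) + F a b (br c d e)" for a b c d e
    unfolding QN B_ccX Bc Qc0 using Npos by (simp add: cst_def tri_zero[OF tri])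
  have QQ1: "Q (Q (cst a) (cst b) (cst c)) (cst d) (cst e) N = br (F a b c) d e + F (br a b c) d e" for a b c d e
    unfolding QN B_Xcc Bc Qc0 using Npos by (simp add: cst_def tri_zero[OF tri])
  have QQ2: "Q (cst c) (Q (cst a) (cst b) (cst d)) (cst e) N = br c (F a b d) e + F c (br a b d) e" for a b c d e
    unfolding QN B_cXc Bc Qc0 using Npos by (simp add: cst_def tri_zero[OF tri])
  have Q1: "\<And>da db dc a b c. a \<in> ps_hom T0 T1 da \<Longrightarrow> b \<in> ps_hom T0 T1 db \<Longrightarrow> c \<in> ps_hom T0 T1 dc \<Longrightarrow>
        Q a b c \<in> ps_hom T0 T1 (da + db + dc)
      \<and> Q b a c = ps_scale sc (- \<delta> * sg (da * db)) (Q a b c)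
      \<and> ps_add (ps_add (ps_scale sc (sg (da * dc)) (Q a b c)) (ps_scale sc (sg (db * da)) (Q b c a)))
           (ps_scale sc (sg (dc * db)) (Q c a b)) = (\<lambda>n. 0)"
    using Qax unfolding jlsts_ax_def by blast
  have Q2: "\<And>da db dc dd de a b c d e. a \<in> ps_hom T0 T1 da \<Longrightarrow> b \<in> ps_hom T0 T1 db \<Longrightarrow> c \<in> ps_hom T0 T1 dc \<Longrightarrow>
        d \<in> ps_hom T0 T1 dd \<Longrightarrow> e \<in> ps_hom T0 T1 de \<Longrightarrow>
      Q a b (Q c d e) =
        ps_add (ps_add (Q (Q a b c) d e) (ps_scale sc (sg (dc * (da + db))) (Q c (Q a b d) e)))
           (ps_scale sc (\<delta> * sg ((da + db) * (dc + dd))) (Q c d (Q a b e)))"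
    using Qax unfolding jlsts_ax_def by blast
  have Fdeg: "F x y z \<in> H (dx + dy + dz)" if "x \<in> H dx" "y \<in> H dy" "z \<in> H dz" for x y z dx dy dz
  proof -
    have "Q (cst x) (cst y) (cst z) \<in> ps_hom T0 T1 (dx + dy + dz)"
      using Q1[OF cst_hom[OF that(1)] cst_hom[OF that(2)] cst_hom[OF that(3)]] by blast
    then have "Q (cst x) (cst y) (cst z) N \<in> H (dx + dy + dz)" unfolding ps_hom_def by blast
    then show ?thesis unfolding Qc .
  qed
  have FA2: "F y x z = sc (- \<delta> * sg (dx * dy)) (F x y z)" if "x \<in> H dx" "y \<in> H dy" "z \<in> H dz" for x y z dx dy dz
  proof -
    have "Q (cst y) (cst x) (cst z) = ps_scale sc (- \<delta> * sg (dx * dy)) (Q (cst x) (cst y) (cst z))"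
      using Q1[OF cst_hom[OF that(1)] cst_hom[OF that(2)] cst_hom[OF that(3)]] by blast
    then have "Q (cst y) (cst x) (cst z) N = sc (- \<delta> * sg (dx * dy)) (Q (cst x) (cst y) (cst z) N)"
      by (simp add: ps_scale_def)
    then show ?thesis using Qc by simp
  qed
  have FA3: "sc (sg (dx * dz)) (F x y z) + sc (sg (dy * dx)) (F y z x) + sc (sg (dz * dy)) (F z x y) = 0"
    if "x \<in> H dx" "y \<in> H dy" "z \<in> H dz" for x y z dx dy dz
  proof -
    have "ps_add (ps_add (ps_scale sc (sg (dx * dz)) (Q (cst x) (cst y) (cst z))) (ps_scale sc (sg (dy * dx)) (Q (cst y) (cst z) (cst x))))
           (ps_scale sc (sg (dz * dy)) (Q (cst z) (cst x) (cst y))) = (\<lambda>n. 0)"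
      using Q1[OF cst_hom[OF that(1)] cst_hom[OF that(2)] cst_hom[OF that(3)]] by blast
    then have "ps_add (ps_add (ps_scale sc (sg (dx * dz)) (Q (cst x) (cst y) (cst z))) (ps_scale sc (sg (dy * dx)) (Q (cst y) (cst z) (cst x))))
           (ps_scale sc (sg (dz * dy)) (Q (cst z) (cst x) (cst y))) N = 0"
      by simp
    then show ?thesis using Qc by (simp add: ps_add_def ps_scale_def)
  qed
  have FA4: "br a b (F c d e) + F a b (br c d e) =
        (br (F a b c) d e + F (br a b c) d e)
        + sc (sg (dc * (da + db))) (br c (F a b d) e + F c (br a b d) e)
        + sc (\<delta> * sg ((da + db) * (dc + dd))) (br c d (F a b e) + F c d (br a b e))"
    if "a \<in> H da" "b \<in> H db" "c \<in> H dc" "d \<in> H dd" "e \<in> H de" for a b c d e da db dc dd de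
  proof -
    have "Q (cst a) (cst b) (Q (cst c) (cst d) (cst e)) =
        ps_add (ps_add (Q (Q (cst a) (cst b) (cst c)) (cst d) (cst e)) (ps_scale sc (sg (dc * (da + db))) (Q (cst c) (Q (cst a) (cst b) (cst d)) (cst e))))
           (ps_scale sc (\<delta> * sg ((da + db) * (dc + dd))) (Q (cst c) (cst d) (Q (cst a) (cst b) (cst e))))"
      by (rule Q2[OF cst_hom[OF that(1)] cst_hom[OF that(2)] cst_hom[OF that(3)] cst_hom[OF that(4)] cst_hom[OF that(5)]])
    then have "Q (cst a) (cst b) (Q (cst c) (cst d) (cst e)) N =
        ps_add (ps_add (Q (Q (cst a) (cst b) (cst c)) (cst d) (cst e)) (ps_scale sc (sg (dc * (da + db))) (Q (cst c) (Q (cst a) (cst b) (cst d)) (cst e))))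
           (ps_scale sc (\<delta> * sg ((da + db) * (dc + dd))) (Q (cst c) (cst d) (Q (cst a) (cst b) (cst e)))) N"
      by simp
    then show ?thesis by (simp add: ps_add_def ps_scale_def QQ1 QQ2 QQ3)
  qed
  have Ftri: "trilinear sc F"
    unfolding trilinear_def F_def E_def
    by (intro conjI allI linI) (simp_all add: E_cst_add[OF adm] E_cst_scale[OF adm])
  have FZ: "F \<in> Z3 sc T0 T1 \<delta> br"
    unfolding Z3_def C3_def
  proof (intro CollectI conjI allI impI Ftri)
    fix d1 d2 d3 x1 x2 x3 assume h: "x1 \<in> H d1" "x2 \<in> H d2" "x3 \<in> H d3"
    show "F x2 x1 x3 = sc (- \<delta> * sg (d1 * d2)) (F x1 x2 x3)" by (rule FA2[OF h])
    show "sc (sg (d1 * d3)) (F x1 x2 x3) + sc (sg (d2 * d1)) (F x2 x3 x1) + sc (sg (d3 * d2)) (F x3 x1 x2) = 0"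
      by (rule FA3[OF h])
  next
    fix d1 d2 d3 d4 d5 x1 x2 x3 x4 x5
    assume h: "x1 \<in> H d1" "x2 \<in> H d2" "x3 \<in> H d3" "x4 \<in> H d4" "x5 \<in> H d5"
    show "d3hom sc br \<delta> (comp3 T0 T1 F 0) 0 x1 d1 x2 d2 x3 d3 x4 d4 x5 d5
       + d3hom sc br \<delta> (comp3 T0 T1 F 1) 1 x1 d1 x2 d2 x3 d3 x4 d4 x5 d5 = 0"
      by (rule d3_zero[OF Fdeg FA4 h])
  qed
  then have "F \<in> B3 sc T0 T1 \<delta> br" using H3 unfolding H3_zero_def by blast
  then obtain g where g: "Vector_Spaces.linear sc sc g"
    and gF: "\<And>d1 d2 d3 x1 x2 x3. x1 \<in> H d1 \<Longrightarrow> x2 \<in> H d2 \<Longrightarrow> x3 \<in> H d3 \<Longrightarrow>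
        F x1 x2 x3 = d1hom sc br \<delta> (comp1 T0 T1 g 0) 0 x1 d1 x2 d2 x3 d3
                   + d1hom sc br \<delta> (comp1 T0 T1 g 1) 1 x1 d1 x2 d2 x3 d3"
    unfolding B3_def by blast
  define g0 where "g0 = evpart g"
  have g0lin: "Vector_Spaces.linear sc sc g0" unfolding g0_def by (rule ev_lin[OF g])
  have g0pres: "\<forall>d x. x \<in> H d \<longrightarrow> g0 x \<in> H d" unfolding g0_def using ev_pres[OF g] by blast
  have Fstd: "F x1 x2 x3 = br (g0 x1) x2 x3 + br x1 (g0 x2) x3 + br x1 x2 (g0 x3) - g0 (br x1 x2 x3)"
    if h: "x1 \<in> H d1" "x2 \<in> H d2" "x3 \<in> H d3" for x1 x2 x3 d1 d2 d3
    unfolding g0_def by (rule B3_analysis[where F=F, OF g h Fdeg[OF h] gF[OF h]])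
  define \<phi>' where "\<phi>' = \<psi>(N := g0)"
  have adm': "adm \<phi>'"
    unfolding adm_def \<phi>'_def using adm Npos g0lin g0pres by (auto simp: adm_def)
  define U where "U x = (\<lambda>m. if m = N then g0 x else 0)" for x
  have appc: "ps_app \<phi>' (cst x) = ps_app \<psi> (cst x) + U x" for x
  proof (rule ext)
    fix m show "ps_app \<phi>' (cst x) m = (ps_app \<psi> (cst x) + U x) m"
      using app_cst[of \<phi>' x m, OF adm_lin[OF adm']] app_cst[of \<psi> x m, OF lin] \<psi>N
      by (simp add: \<phi>'_def U_def)
  qed
  have U0: "U x 0 = 0" for x using Npos by (simp add: U_def)
  have Usupp: "\<And>m. m \<noteq> N \<Longrightarrow> U x m = 0" for x by (simp add: U_def)
  have a0: "ps_app \<psi> (cst x) 0 = x" for x using app_0[of \<psi>, OF id0] by (simp add: cst_def)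
  have gB1: "\<And>v w. good1 sc (\<lambda>a. B a v w)" by (rule good3_1[OF good_B])
  have gB2: "\<And>u w. good1 sc (\<lambda>b. B u b w)" by (rule good3_2[OF good_B])
  have gB3: "\<And>u v. good1 sc (\<lambda>c. B u v c)" by (rule good3_3[OF good_B])
  have Bexp: "B (ps_app \<phi>' (cst x)) (ps_app \<phi>' (cst y)) (ps_app \<phi>' (cst z)) N
     = B (ps_app \<psi> (cst x)) (ps_app \<psi> (cst y)) (ps_app \<psi> (cst z)) N
       + br x y (g0 z) + br x (g0 y) z + br (g0 x) y z" for x y z
  proof -
    let ?a = "ps_app \<psi> (cst x)" and ?b = "ps_app \<psi> (cst y)" and ?c = "ps_app \<psi> (cst z)"
    have "B (?a + U x) (?b + U y) (?c + U z) = B ?a (?b + U y) (?c + U z) + B (U x) (?b + U y) (?c + U z)"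
      by (rule good1_add[OF gB1])
    also have "B ?a (?b + U y) (?c + U z) = B ?a ?b (?c + U z) + B ?a (U y) (?c + U z)"
      by (rule good1_add[OF gB2])
    also have "B ?a ?b (?c + U z) = B ?a ?b ?c + B ?a ?b (U z)"
      by (rule good1_add[OF gB3])
    finally have eqf: "B (?a + U x) (?b + U y) (?c + U z) = B ?a ?b ?c + B ?a ?b (U z) + B ?a (U y) (?c + U z)
        + B (U x) (?b + U y) (?c + U z)" by (simp only: add.assoc)
    have "B (?a + U x) (?b + U y) (?c + U z) N = B ?a ?b ?c N + B ?a ?b (U z) N + B ?a (U y) (?c + U z) N
        + B (U x) (?b + U y) (?c + U z) N" using fun_cong[OF eqf, of N] by (simp only: plus_fun_apply)
    moreover have "B ?a ?b (U z) N = br x y (g0 z)"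
    proof -
      have "B ?a ?b (U z) N = br (?a 0) (?b 0) (U z N)" by (rule B_supp3) (simp add: U_def)
      then show ?thesis by (simp add: a0 U_def)
    qed
    moreover have "B ?a (U y) (?c + U z) N = br x (g0 y) z"
    proof -
      have "B ?a (U y) (?c + U z) N = br (?a 0) (U y N) ((?c + U z) 0)" by (rule B_supp2) (simp add: U_def)
      then show ?thesis using Npos by (simp add: a0 U_def)
    qed
    moreover have "B (U x) (?b + U y) (?c + U z) N = br (g0 x) y z"
    proof -
      have "B (U x) (?b + U y) (?c + U z) N = br (U x N) ((?b + U y) 0) ((?c + U z) 0)" by (rule B_supp1) (simp add: U_def)
      then show ?thesis using Npos by (simp add: a0 U_def)
    qed
    ultimately show ?thesis unfolding appc by simp
  qed
  have Eform: "Efun \<phi>' (cst x) (cst y) (cst z) N = F x y z + g0 (br x y z) - br x y (g0 z) - br x (g0 y) z - br (g0 x) y z"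
    for x y z
  proof -
    have "ps_app \<phi>' (ps_prod f (cst x) (cst y) (cst z)) N = ps_app \<psi> (ps_prod f (cst x) (cst y) (cst z)) N + g0 (br x y z)"
      unfolding \<phi>'_def app_upd[of \<psi> N, OF \<psi>N] by (simp add: P_0 cst_def)
    then show ?thesis unfolding F_def E_def Efun_def minus_apply Bexp by (simp add: algebra_simps)
  qed
  have Ez: "Efun \<phi>' (cst x) (cst y) (cst z) N = 0" for x y z
  proof (rule ext_hom[where G = "\<lambda>x y z. Efun \<phi>' (cst x) (cst y) (cst z) N"])
    show "\<And>x x' y z. Efun \<phi>' (cst (x + x')) (cst y) (cst z) N = Efun \<phi>' (cst x) (cst y) (cst z) N + Efun \<phi>' (cst x') (cst y) (cst z) N"
      by (rule E_cst_add(1)[OF adm'])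
    show "\<And>x y y' z. Efun \<phi>' (cst x) (cst (y + y')) (cst z) N = Efun \<phi>' (cst x) (cst y) (cst z) N + Efun \<phi>' (cst x) (cst y') (cst z) N"
      by (rule E_cst_add(2)[OF adm'])
    show "\<And>x y z z'. Efun \<phi>' (cst x) (cst y) (cst (z + z')) N = Efun \<phi>' (cst x) (cst y) (cst z) N + Efun \<phi>' (cst x) (cst y) (cst z') N"
      by (rule E_cst_add(3)[OF adm'])
    fix x y z dx dy dz assume h: "x \<in> H dx" "y \<in> H dy" "z \<in> H dz"
    show "Efun \<phi>' (cst x) (cst y) (cst z) N = 0"
      unfolding Eform Fstd[OF h] by (simp add: algebra_simps)
  qed
  show ?thesis
    using g0lin g0pres Ez unfolding \<phi>'_def by blast
qed

end

context jd begin

definition nxt :: "(nat \<Rightarrow> 'v \<Rightarrow> 'v) \<Rightarrow> nat \<Rightarrow> 'v \<Rightarrow> 'v" where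
  "nxt \<psi> N = (SOME g. Vector_Spaces.linear sc sc g \<and> (\<forall>d x. x \<in> H d \<longrightarrow> g x \<in> H d)
     \<and> (\<forall>x y z. Efun (\<psi>(N := g)) (cst x) (cst y) (cst z) N = 0))"

primrec phis :: "nat \<Rightarrow> nat \<Rightarrow> 'v \<Rightarrow> 'v" where
  "phis 0 = (\<lambda>i. if i = 0 then id else (\<lambda>x. 0))"
| "phis (Suc n) = (phis n)(Suc n := nxt (phis n) (Suc n))"

lemma adm_upd:
  assumes "adm \<psi>" "0 < N" "Vector_Spaces.linear sc sc g" "\<forall>d x. x \<in> H d \<longrightarrow> g x \<in> H d"
  shows "adm (\<psi>(N := g))"
  using assms unfolding adm_def by auto

lemma lin_id: "Vector_Spaces.linear sc sc id" by (rule linI) simp_all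
lemma lin_0: "Vector_Spaces.linear sc sc (\<lambda>x. 0)" by (rule linI) simp_all

lemma phis_inv:
  assumes H3: "H3_zero sc T0 T1 \<delta> br"
  shows "adm (phis n) \<and> (\<forall>i. n < i \<longrightarrow> phis n i = (\<lambda>x. 0))
    \<and> (\<forall>x y z m. m \<le> n \<longrightarrow> Efun (phis n) (cst x) (cst y) (cst z) m = 0)"
proof (induction n)
  case 0
  have a: "adm (phis 0)" unfolding adm_def by (auto simp: lin_id lin_0 H0)
  show ?case using a E_0[OF a] by auto
next
  case (Suc n)
  let ?\<psi> = "phis n"
  have adm: "adm ?\<psi>" and z: "?\<psi> (Suc n) = (\<lambda>x. 0)"
    and v: "\<And>x y z m. m < Suc n \<Longrightarrow> Efun ?\<psi> (cst x) (cst y) (cst z) m = 0"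
    using Suc.IH by auto
  have ex: "\<exists>g. Vector_Spaces.linear sc sc g \<and> (\<forall>d x. x \<in> H d \<longrightarrow> g x \<in> H d)
     \<and> (\<forall>x y z. Efun (?\<psi>(Suc n := g)) (cst x) (cst y) (cst z) (Suc n) = 0)"
    by (rule step[OF H3 adm z _ v]) simp_all
  have g: "Vector_Spaces.linear sc sc (nxt ?\<psi> (Suc n)) \<and> (\<forall>d x. x \<in> H d \<longrightarrow> nxt ?\<psi> (Suc n) x \<in> H d)
     \<and> (\<forall>x y z. Efun (?\<psi>(Suc n := nxt ?\<psi> (Suc n))) (cst x) (cst y) (cst z) (Suc n) = 0)"
    unfolding nxt_def by (rule someI_ex[OF ex])
  have a: "adm (phis (Suc n))" using adm_upd[OF adm _ conjunct1[OF g] conjunct1[OF conjunct2[OF g]]] by simp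
  have e: "Efun (phis (Suc n)) (cst x) (cst y) (cst z) m = 0" if "m \<le> Suc n" for x y z m
  proof (cases "m = Suc n")
    case True then show ?thesis using g by simp
  next
    case False
    then have "m < Suc n" using that by simp
    have "Efun (phis (Suc n)) (cst x) (cst y) (cst z) m = Efun ?\<psi> (cst x) (cst y) (cst z) m"
      by (rule E_causal) (use \<open>m < Suc n\<close> in auto)
    then show ?thesis using v[OF \<open>m < Suc n\<close>] by simp
  qed
  show ?case
  proof (intro conjI allI impI)
    show "adm (phis (Suc n))" by (rule a)
  next
    fix i assume "Suc n < i" then show "phis (Suc n) i = (\<lambda>x. 0)" using Suc.IH by simp
  next
    fix x y z m assume "m \<le> Suc n"
    then show "Efun (phis (Suc n)) (cst x) (cst y) (cst z) m = 0" by (rule e)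
  qed
qed

lemma phis_stable: "i \<le> n \<Longrightarrow> phis n i = phis i i"
proof (induction n)
  case 0 then show ?case by simp
next
  case (Suc n)
  show ?case
  proof (cases "i = Suc n")
    case True then show ?thesis by simp
  next
    case False
    then have "i \<le> n" using Suc.prems by simp
    have "phis (Suc n) i = phis n i" using False by simp
    also have "\<dots> = phis i i" by (rule Suc.IH[OF \<open>i \<le> n\<close>])
    finally show ?thesis .
  qed
qed

lemma main:
  assumes H3: "H3_zero sc T0 T1 \<delta> br"
  shows "equivalent_deformations sc f (null_deformation br)"
proof -
  define \<phi> where "\<phi> i = phis i i" for i
  have adm: "adm \<phi>"
  proof -
    have "\<And>i. adm (phis i)" using phis_inv[OF H3] by blast
    then show ?thesis unfolding adm_def \<phi>_def by simp
  qed
  have ec: "Efun \<phi> (cst x) (cst y) (cst z) n = 0" for x y z n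
  proof -
    have "Efun \<phi> (cst x) (cst y) (cst z) n = Efun (phis n) (cst x) (cst y) (cst z) n"
    proof (rule E_causal)
      fix i assume "i \<le> n"
      then show "\<phi> i = phis n i" unfolding \<phi>_def by (rule phis_stable[symmetric])
    qed
    then show ?thesis using phis_inv[OF H3, of n] by simp
  qed
  have e: "Efun \<phi> a b c n = 0" for a b c n
    by (rule good3_L1[OF E_good[OF adm], of "Suc n"]) (simp_all add: ec)
  have eq: "ps_app \<phi> (ps_prod f a b c) = ps_prod (null_deformation br) (ps_app \<phi> a) (ps_app \<phi> b) (ps_app \<phi> c)" for a b c
  proof (rule ext)
    fix n
    have "Efun \<phi> a b c n = 0" by (rule e)
    then show "ps_app \<phi> (ps_prod f a b c) n = ps_prod (null_deformation br) (ps_app \<phi> a) (ps_app \<phi> b) (ps_app \<phi> c) n"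
      unfolding Efun_def B_def by simp
  qed
  show ?thesis unfolding equivalent_deformations_def
    using adm eq by (auto simp: adm_def)
qed

end

theorem theorem4p5:
  fixes sc :: "'k::field \<Rightarrow> 'v::ab_group_add \<Rightarrow> 'v"
    and T0 T1 :: "'v set" and \<delta> :: 'k and br :: "'v \<Rightarrow> 'v \<Rightarrow> 'v \<Rightarrow> 'v"
  assumes "jlsts sc T0 T1 \<delta> br"
    and "H3_zero sc T0 T1 \<delta> br"
  shows "\<forall>f. deformation sc T0 T1 \<delta> br f \<longrightarrow>
           equivalent_deformations sc f (null_deformation br)"
proof (intro allI impI)
  fix f assume d: "deformation sc T0 T1 \<delta> br f"
  interpret jd sc T0 T1 \<delta> br f
    by (intro jd.intro jl.intro jd_axioms.intro assms(1) d)
  show "equivalent_deformations sc f (null_deformation br)" by (rule main[OF assms(2)])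
qed

end
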